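(* Let $\mathrm{st}(\hat p)$ be a full $m$-dimensional star embedded in $\mathbb{R}^m$ such that every $m$-simplex $\sigma$ of it satisfies $s_0\le L(\sigma)\le L_0$ and $t(\sigma)\ge t_0$. Let $F\colon|\mathrm{st}(\hat p)|\to\mathbb{R}^m$ fix every vertex, and suppose its restriction to every $m$-simplex is a $\xi$-distortion map with $$\xi<\frac16\,\frac{m}{m+1}\,\frac{s_0}{L_0}\,t_0^2.$$ For $\delta>0$ let $V_\delta$ be the set of points of $|\mathrm{st}(\hat p)|$ whose barycentric coordinate with respect to $\hat p$, in an $m$-simplex containing them, is strictly greater than $\frac1{m+1}-\delta$. Then for every $\delta$ with $0<\delta\le\frac1{m+1}-\frac{6L_0\xi}{m s_0t_0^2}$, one has $F(V_\delta)\cap F(|\partial\,\mathrm{st}(\hat p)|)=\emptyset$.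
   Context: $\mathrm{st}(\hat p)$ is the complex of all simplices with vertex $\hat p$ and their faces; it is a full star if its carrier is an $m$-manifold with boundary and $\hat p$ is not in the boundary complex $\partial\,\mathrm{st}(\hat p)$ (the $(m-1)$-simplices that are faces of exactly one $m$-simplex, with their faces). For an $m$-simplex, $L$ is the longest edge length, $a$ the smallest altitude, $t=a/(mL)$. $F$ is a $\xi$-distortion map on a set if $\bigl|\|F(x)-F(y)\|-\|x-y\|\bigr|\le\xi\|x-y\|$ there. *)

theory Defs
  imports "HOL-Analysis.Analysis"
begin

text \<open>Geometric simplicial complexes in real^'m, represented by the vertex sets
of their simplices. A simplex is a finite, nonempty, affinely independent set of
points; its geometric realisation is its convex hull. The dimension m of the
ambient space is CARD('m).\<close>

definition simplicial_complex :: "(real^'m) set set \<Rightarrow> bool" where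
  "simplicial_complex K \<longleftrightarrow>
     finite K \<and>
     (\<forall>\<sigma>\<in>K. finite \<sigma> \<and> \<sigma> \<noteq> {} \<and> \<not> affine_dependent \<sigma>) \<and>
     (\<forall>\<sigma>\<in>K. \<forall>\<tau>. \<tau> \<subseteq> \<sigma> \<and> \<tau> \<noteq> {} \<longrightarrow> \<tau> \<in> K) \<and>
     (\<forall>\<sigma>\<in>K. \<forall>\<tau>\<in>K. convex hull \<sigma> \<inter> convex hull \<tau> = convex hull (\<sigma> \<inter> \<tau>))"

definition carrier :: "(real^'m) set set \<Rightarrow> (real^'m) set" where
  "carrier K = (\<Union>\<sigma>\<in>K. convex hull \<sigma>)"

definition top_simplices :: "(real^'m) set set \<Rightarrow> (real^'m) set set" where
  "top_simplices K = {\<sigma>\<in>K. card \<sigma> = CARD('m) + 1}"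

definition is_star :: "real^'m \<Rightarrow> (real^'m) set set \<Rightarrow> bool" where
  "is_star p K \<longleftrightarrow> simplicial_complex K \<and> {p} \<in> K \<and>
     (\<forall>\<tau>\<in>K. \<exists>\<sigma>\<in>K. p \<in> \<sigma> \<and> \<tau> \<subseteq> \<sigma>)"

definition boundary_complex :: "(real^'m) set set \<Rightarrow> (real^'m) set set" where
  "boundary_complex K = {\<tau>. \<tau> \<noteq> {} \<and> (\<exists>\<rho>\<in>K. card \<rho> = CARD('m) \<and>
       card {\<sigma>\<in>top_simplices K. \<rho> \<subseteq> \<sigma>} = 1 \<and> \<tau> \<subseteq> \<rho>)}"

definition manifold_with_boundary :: "(real^'m) set \<Rightarrow> bool" where
  "manifold_with_boundary M \<longleftrightarrow>
     (\<forall>x\<in>M. \<exists>U V i. openin (top_of_set M) U \<and> x \<in> U \<and>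
        openin (top_of_set {y::real^'m. 0 \<le> y $ i}) V \<and> U homeomorphic V)"

definition full_star :: "real^'m \<Rightarrow> (real^'m) set set \<Rightarrow> bool" where
  "full_star p K \<longleftrightarrow> is_star p K \<and> manifold_with_boundary (carrier K) \<and>
     {p} \<notin> boundary_complex K"

definition longest_edge :: "(real^'m) set \<Rightarrow> real" where
  "longest_edge \<sigma> = Max {dist x y | x y. x \<in> \<sigma> \<and> y \<in> \<sigma>}"

definition smallest_altitude :: "(real^'m) set \<Rightarrow> real" where
  "smallest_altitude \<sigma> = Min ((\<lambda>v. infdist v (affine hull (\<sigma> - {v}))) ` \<sigma>)"

definition thickness :: "(real^'m) set \<Rightarrow> real" where
  "thickness \<sigma> = smallest_altitude \<sigma> / (real CARD('m) * longest_edge \<sigma>)"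

definition bary_coord :: "(real^'m) set \<Rightarrow> real^'m \<Rightarrow> real^'m \<Rightarrow> real" where
  "bary_coord \<sigma> p x = (THE l. \<exists>u. sum u \<sigma> = 1 \<and> (\<Sum>v\<in>\<sigma>. u v *\<^sub>R v) = x \<and> l = u p)"

definition distortion_map :: "real \<Rightarrow> ('a::real_normed_vector \<Rightarrow> 'b::real_normed_vector) \<Rightarrow> 'a set \<Rightarrow> bool" where
  "distortion_map \<xi> F S \<longleftrightarrow>
     (\<forall>x\<in>S. \<forall>y\<in>S. \<bar>norm (F x - F y) - norm (x - y)\<bar> \<le> \<xi> * norm (x - y))"

definition V_delta :: "real^'m \<Rightarrow> (real^'m) set set \<Rightarrow> real \<Rightarrow> (real^'m) set" where
  "V_delta p K \<delta> = {x \<in> carrier K. \<exists>\<sigma>\<in>top_simplices K. p \<in> \<sigma> \<and> x \<in> convex hull \<sigma> \<and>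
        bary_coord \<sigma> p x > 1 / (real CARD('m) + 1) - \<delta>}"

end

theory Submission
  imports Defs
begin



definition sx :: "(real^'m) set \<Rightarrow> bool" where
  "sx \<sigma> \<longleftrightarrow> finite \<sigma> \<and> \<not> affine_dependent \<sigma> \<and> affine hull \<sigma> = UNIV"

lemma sx_top:
  fixes \<sigma> :: "(real^'m) set"
  assumes "finite \<sigma>" "\<not> affine_dependent \<sigma>" "card \<sigma> = CARD('m) + 1"
  shows "sx \<sigma>"
proof -
  have "of_nat (card \<sigma>) = aff_dim \<sigma> + 1" by (rule aff_dim_affine_independent[OF assms(2)])
  then have "aff_dim \<sigma> = int (card \<sigma>) - 1" by simp
  then have "aff_dim \<sigma> = int DIM(real^'m)" using assms(3) by simp
  then have "affine hull \<sigma> = UNIV" using aff_dim_eq_full[of \<sigma>] by simp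
  then show ?thesis using assms(1,2) by (simp add: sx_def)
qed

lemma bc_unique:
  assumes "sx \<sigma>" "sum u \<sigma> = 1" "(\<Sum>w\<in>\<sigma>. u w *\<^sub>R w) = x" "v \<in> \<sigma>"
  shows "bary_coord \<sigma> v x = u v"
  unfolding bary_coord_def
proof (rule the_equality)
  show "\<exists>u'. sum u' \<sigma> = 1 \<and> (\<Sum>v\<in>\<sigma>. u' v *\<^sub>R v) = x \<and> u v = u' v"
    by (rule exI[of _ u]) (use assms in simp)
next
  fix l assume "\<exists>u'. sum u' \<sigma> = 1 \<and> (\<Sum>v\<in>\<sigma>. u' v *\<^sub>R v) = x \<and> l = u' v"
  then obtain u' where u': "sum u' \<sigma> = 1" "(\<Sum>v\<in>\<sigma>. u' v *\<^sub>R v) = x" "l = u' v" by blast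
  have fin: "finite \<sigma>" and ind: "\<not> affine_dependent \<sigma>" using assms(1) sx_def by auto
  let ?U = "\<lambda>w. u w - u' w"
  have h1: "sum ?U \<sigma> = 0" using assms(2) u'(1) by (simp add: sum_subtractf)
  have h2: "(\<Sum>w\<in>\<sigma>. ?U w *\<^sub>R w) = 0"
    using assms(3) u'(2) by (simp add: scaleR_diff_left sum_subtractf)
  have nd: "\<forall>w\<in>\<sigma>. U w = 0" if "sum U \<sigma> = 0" "sum (\<lambda>v. U v *\<^sub>R v) \<sigma> = 0" for U
  proof (rule ccontr)
    assume "\<not> (\<forall>w\<in>\<sigma>. U w = 0)"
    then have "\<exists>v\<in>\<sigma>. U v \<noteq> 0" by blast
    then have "affine_dependent \<sigma>" using that affine_dependent_explicit_finite[OF fin] by blast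
    then show False using ind by simp
  qed
  have "\<forall>w\<in>\<sigma>. ?U w = 0" by (rule nd[OF h1 h2])
  then show "l = u v" using u'(3) assms(4) by auto
qed

lemma bc_ex:
  assumes "sx \<sigma>"
  shows "\<exists>u. sum u \<sigma> = 1 \<and> (\<Sum>w\<in>\<sigma>. u w *\<^sub>R w) = x"
proof -
  have fin: "finite \<sigma>" and hu: "affine hull \<sigma> = UNIV" using assms sx_def by auto
  have "x \<in> affine hull \<sigma>" using hu by simp
  then have "x \<in> {y. \<exists>u. sum u \<sigma> = 1 \<and> sum (\<lambda>v. u v *\<^sub>R v) \<sigma> = y}"
    using affine_hull_finite[OF fin] by simp
  then show ?thesis by simp
qed

lemma bc_sum_rep:
  assumes "sx \<sigma>"
  shows "(\<Sum>w\<in>\<sigma>. bary_coord \<sigma> w x) = 1 \<and> (\<Sum>w\<in>\<sigma>. bary_coord \<sigma> w x *\<^sub>R w) = x"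
proof -
  obtain u where u: "sum u \<sigma> = 1" "(\<Sum>w\<in>\<sigma>. u w *\<^sub>R w) = x" using bc_ex assms by blast
  have "\<And>w. w \<in> \<sigma> \<Longrightarrow> bary_coord \<sigma> w x = u w" by (rule bc_unique[OF assms u])
  then show ?thesis using u by (simp cong: sum.cong)
qed

lemma bc_sum: "sx \<sigma> \<Longrightarrow> (\<Sum>w\<in>\<sigma>. bary_coord \<sigma> w x) = 1"
  using bc_sum_rep by blast
lemma bc_rep: "sx \<sigma> \<Longrightarrow> (\<Sum>w\<in>\<sigma>. bary_coord \<sigma> w x *\<^sub>R w) = x"
  using bc_sum_rep by blast

lemma bc_comb2:
  assumes "sx \<sigma>" "v \<in> \<sigma>" "a + b = 1"
  shows "bary_coord \<sigma> v (a *\<^sub>R x + b *\<^sub>R y) = a * bary_coord \<sigma> v x + b * bary_coord \<sigma> v y"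
proof -
  let ?u = "\<lambda>w. a * bary_coord \<sigma> w x + b * bary_coord \<sigma> w y"
  have "sum ?u \<sigma> = a * (\<Sum>w\<in>\<sigma>. bary_coord \<sigma> w x) + b * (\<Sum>w\<in>\<sigma>. bary_coord \<sigma> w y)"
    by (simp add: sum.distrib sum_distrib_left)
  then have s: "sum ?u \<sigma> = 1" using bc_sum[OF assms(1)] assms(3) by simp
  have "(\<Sum>w\<in>\<sigma>. ?u w *\<^sub>R w) = a *\<^sub>R (\<Sum>w\<in>\<sigma>. bary_coord \<sigma> w x *\<^sub>R w) + b *\<^sub>R (\<Sum>w\<in>\<sigma>. bary_coord \<sigma> w y *\<^sub>R w)"
    by (simp add: scaleR_add_left sum.distrib scaleR_sum_right)
  then have r: "(\<Sum>w\<in>\<sigma>. ?u w *\<^sub>R w) = a *\<^sub>R x + b *\<^sub>R y"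
    using bc_rep[OF assms(1)] by simp
  from bc_unique[OF assms(1) s r assms(2)] show ?thesis by simp
qed

lemma bc_affsum:
  assumes "sx \<sigma>" "v \<in> \<sigma>" "finite I" "sum c I = 1"
  shows "bary_coord \<sigma> v (\<Sum>i\<in>I. c i *\<^sub>R z i) = (\<Sum>i\<in>I. c i * bary_coord \<sigma> v (z i))"
proof -
  let ?u = "\<lambda>w. \<Sum>i\<in>I. c i * bary_coord \<sigma> w (z i)"
  have fin: "finite \<sigma>" using assms sx_def by auto
  have "sum ?u \<sigma> = (\<Sum>i\<in>I. c i * (\<Sum>w\<in>\<sigma>. bary_coord \<sigma> w (z i)))"
    by (subst sum.swap) (simp add: sum_distrib_left)
  also have "\<dots> = 1" using bc_sum[OF assms(1)] assms(4) by simp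
  finally have s: "sum ?u \<sigma> = 1" .
  have "(\<Sum>w\<in>\<sigma>. ?u w *\<^sub>R w) = (\<Sum>w\<in>\<sigma>. \<Sum>i\<in>I. (c i * bary_coord \<sigma> w (z i)) *\<^sub>R w)"
    by (simp add: scaleR_sum_left)
  also have "\<dots> = (\<Sum>i\<in>I. \<Sum>w\<in>\<sigma>. (c i * bary_coord \<sigma> w (z i)) *\<^sub>R w)"
    by (rule sum.swap)
  also have "\<dots> = (\<Sum>i\<in>I. c i *\<^sub>R (\<Sum>w\<in>\<sigma>. bary_coord \<sigma> w (z i) *\<^sub>R w))"
    by (simp add: scaleR_sum_right)
  also have "\<dots> = (\<Sum>i\<in>I. c i *\<^sub>R z i)" using bc_rep[OF assms(1)] by simp
  finally have "(\<Sum>w\<in>\<sigma>. ?u w *\<^sub>R w) = (\<Sum>i\<in>I. c i *\<^sub>R z i)" .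
  from bc_unique[OF assms(1) s this assms(2)] show ?thesis by simp
qed

lemma bc_conv:
  assumes "sx \<sigma>"
  shows "x \<in> convex hull \<sigma> \<longleftrightarrow> (\<forall>v\<in>\<sigma>. 0 \<le> bary_coord \<sigma> v x)"
proof
  have fin: "finite \<sigma>" using assms sx_def by auto
  assume "x \<in> convex hull \<sigma>"
  then obtain u where u: "\<forall>w\<in>\<sigma>. 0 \<le> u w" "sum u \<sigma> = 1" "(\<Sum>w\<in>\<sigma>. u w *\<^sub>R w) = x"
    using convex_hull_finite[OF fin] by auto
  show "\<forall>v\<in>\<sigma>. 0 \<le> bary_coord \<sigma> v x"
  proof
    fix v assume v: "v \<in> \<sigma>"
    have "bary_coord \<sigma> v x = u v" by (rule bc_unique[OF assms u(2) u(3) v])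
    then show "0 \<le> bary_coord \<sigma> v x" using u(1) v by simp
  qed
next
  have fin: "finite \<sigma>" using assms sx_def by auto
  assume h: "\<forall>v\<in>\<sigma>. 0 \<le> bary_coord \<sigma> v x"
  have "x \<in> {y. \<exists>u. (\<forall>x\<in>\<sigma>. 0 \<le> u x) \<and> sum u \<sigma> = 1 \<and> sum (\<lambda>x. u x *\<^sub>R x) \<sigma> = y}"
    by (rule CollectI, rule exI[of _ "\<lambda>v. bary_coord \<sigma> v x"]) (use h bc_sum[OF assms] bc_rep[OF assms] in simp)
  then show "x \<in> convex hull \<sigma>" using convex_hull_finite[OF fin] by simp
qed

lemma bc_face:
  assumes "sx \<sigma>" "\<phi> \<subseteq> \<sigma>" "x \<in> convex hull \<phi>" "v \<in> \<sigma>"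
  shows "\<exists>u. (\<forall>w\<in>\<phi>. 0 \<le> u w) \<and> sum u \<phi> = 1 \<and> (\<Sum>w\<in>\<phi>. u w *\<^sub>R w) = x \<and>
            bary_coord \<sigma> v x = (if v \<in> \<phi> then u v else 0)"
proof -
  have fin: "finite \<sigma>" using assms sx_def by auto
  then have finp: "finite \<phi>" using assms(2) finite_subset by blast
  obtain u where u: "\<forall>w\<in>\<phi>. 0 \<le> u w" "sum u \<phi> = 1" "(\<Sum>w\<in>\<phi>. u w *\<^sub>R w) = x"
    using convex_hull_finite[OF finp] assms(3) by auto
  let ?u = "\<lambda>w. if w \<in> \<phi> then u w else 0"
  have "sum ?u \<sigma> = sum ?u \<phi>"
    by (rule sum.mono_neutral_right) (use fin assms(2) in auto)
  also have "\<dots> = sum u \<phi>" by (rule sum.cong) auto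
  finally have s1: "sum ?u \<sigma> = sum u \<phi>" .
  have "(\<Sum>w\<in>\<sigma>. ?u w *\<^sub>R w) = (\<Sum>w\<in>\<phi>. ?u w *\<^sub>R w)"
    by (rule sum.mono_neutral_right) (use fin assms(2) in auto)
  also have "\<dots> = (\<Sum>w\<in>\<phi>. u w *\<^sub>R w)" by (rule sum.cong) auto
  finally have s2: "(\<Sum>w\<in>\<sigma>. ?u w *\<^sub>R w) = (\<Sum>w\<in>\<phi>. u w *\<^sub>R w)" .
  from s1 s2 have "bary_coord \<sigma> v x = ?u v" using bc_unique[OF assms(1)] u assms(4) by simp
  then show ?thesis using u by blast
qed

lemma bc_lip:
  assumes "sx \<sigma>" "v \<in> \<sigma>"
  shows "infdist v (affine hull (\<sigma> - {v})) * \<bar>bary_coord \<sigma> v x - bary_coord \<sigma> v y\<bar> \<le> dist x y"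
proof (cases "bary_coord \<sigma> v x = bary_coord \<sigma> v y")
  case True then show ?thesis by simp
next
  case False
  define \<beta> where "\<beta> = bary_coord \<sigma> v y - bary_coord \<sigma> v x"
  have b0: "\<beta> \<noteq> 0" using False \<beta>_def by auto
  define m1 where "m1 = (1/\<beta>) *\<^sub>R x + (1 - 1/\<beta>) *\<^sub>R y"
  define h where "h = (1/2) *\<^sub>R v + (1/2) *\<^sub>R m1"
  define q where "q = 2 *\<^sub>R h + (-1) *\<^sub>R y"
  have bm1: "bary_coord \<sigma> v m1 = (1/\<beta>) * bary_coord \<sigma> v x + (1 - 1/\<beta>) * bary_coord \<sigma> v y"
    unfolding m1_def by (rule bc_comb2[OF assms]) simp
  have bh: "bary_coord \<sigma> v h = (1/2) * bary_coord \<sigma> v v + (1/2) * bary_coord \<sigma> v m1"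
    unfolding h_def by (rule bc_comb2[OF assms]) simp
  have bq: "bary_coord \<sigma> v q = 2 * bary_coord \<sigma> v h + (-1) * bary_coord \<sigma> v y"
    unfolding q_def by (rule bc_comb2[OF assms]) simp
  have bvv: "bary_coord \<sigma> v v = 1"
  proof -
    have fin: "finite \<sigma>" using assms sx_def by auto
    let ?u = "\<lambda>w. if w = v then 1 else (0::real)"
    have "sum ?u \<sigma> = 1" using fin assms(2) by (simp add: sum.delta)
    moreover have "(\<Sum>w\<in>\<sigma>. ?u w *\<^sub>R w) = (\<Sum>w\<in>\<sigma>. if w = v then w else 0)"
      by (rule sum.cong) auto
    moreover have "(\<Sum>w\<in>\<sigma>. if w = v then w else 0) = v" using fin assms(2) by simp
    ultimately show ?thesis using bc_unique[OF assms(1)] assms(2) by force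
  qed
  have q1: "bary_coord \<sigma> v q = 1 + (1/\<beta>) * (bary_coord \<sigma> v x - bary_coord \<sigma> v y)"
    using bm1 bh bq bvv by (simp add: algebra_simps)
  have q2: "(1/\<beta>) * (bary_coord \<sigma> v x - bary_coord \<sigma> v y) = -1"
    using b0 unfolding \<beta>_def by (simp add: field_simps)
  have q0: "bary_coord \<sigma> v q = 0" using q1 q2 by simp
  have qeq: "q = v + (1/\<beta>) *\<^sub>R (x - y)"
    unfolding q_def h_def m1_def by (simp add: algebra_simps)
  have fin: "finite \<sigma>" using assms sx_def by auto
  have "q \<in> affine hull (\<sigma> - {v})"
  proof -
    have s1: "(\<Sum>w\<in>\<sigma>-{v}. bary_coord \<sigma> w q) = 1"
      using bc_sum[OF assms(1), of q] sum.remove[OF fin assms(2), of "\<lambda>w. bary_coord \<sigma> w q"] q0 by simp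
    have s2: "(\<Sum>w\<in>\<sigma>-{v}. bary_coord \<sigma> w q *\<^sub>R w) = q"
      using bc_rep[OF assms(1), of q] sum.remove[OF fin assms(2), of "\<lambda>w. bary_coord \<sigma> w q *\<^sub>R w"] q0 by simp
    have "q \<in> {y. \<exists>u. sum u (\<sigma> - {v}) = 1 \<and> sum (\<lambda>w. u w *\<^sub>R w) (\<sigma> - {v}) = y}"
      by (rule CollectI, rule exI[of _ "\<lambda>w. bary_coord \<sigma> w q"]) (use s1 s2 in simp)
    then show ?thesis using affine_hull_finite[of "\<sigma> - {v}"] fin by simp
  qed
  then have "infdist v (affine hull (\<sigma> - {v})) \<le> dist v q" by (rule infdist_le)
  also have "dist v q = norm (x - y) / \<bar>\<beta>\<bar>" unfolding qeq dist_norm by simp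
  finally have "infdist v (affine hull (\<sigma> - {v})) * \<bar>\<beta>\<bar> \<le> norm (x - y)"
    using b0 by (simp add: field_simps)
  moreover have "\<bar>\<beta>\<bar> = \<bar>bary_coord \<sigma> v x - bary_coord \<sigma> v y\<bar>" unfolding \<beta>_def by (rule abs_minus_commute)
  ultimately show ?thesis by (simp add: dist_norm)
qed





lemma bc_ext:
  assumes "sx \<sigma>" "\<phi> \<subseteq> \<sigma>" "sum u \<phi> = 1" "(\<Sum>w\<in>\<phi>. u w *\<^sub>R w) = x" "v \<in> \<sigma>"
  shows "bary_coord \<sigma> v x = (if v \<in> \<phi> then u v else 0)"
proof -
  have fin: "finite \<sigma>" using assms sx_def by auto
  let ?u = "\<lambda>w. if w \<in> \<phi> then u w else 0"
  have "sum ?u \<sigma> = sum ?u \<phi>"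
    by (rule sum.mono_neutral_right) (use fin assms(2) in auto)
  also have "\<dots> = sum u \<phi>" by (rule sum.cong) auto
  finally have s1: "sum ?u \<sigma> = 1" using assms(3) by simp
  have "(\<Sum>w\<in>\<sigma>. ?u w *\<^sub>R w) = (\<Sum>w\<in>\<phi>. ?u w *\<^sub>R w)"
    by (rule sum.mono_neutral_right) (use fin assms(2) in auto)
  also have "\<dots> = (\<Sum>w\<in>\<phi>. u w *\<^sub>R w)" by (rule sum.cong) auto
  finally have s2: "(\<Sum>w\<in>\<sigma>. ?u w *\<^sub>R w) = x" using assms(4) by simp
  from bc_unique[OF assms(1) s1 s2 assms(5)] show ?thesis .
qed

lemma bc_hull_face:
  assumes "sx \<sigma>" "\<phi> \<subseteq> \<sigma>" "x \<in> convex hull \<phi>" "v \<in> \<sigma>" "v \<notin> \<phi>"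
  shows "bary_coord \<sigma> v x = 0"
proof -
  have fin: "finite \<phi>" using assms sx_def finite_subset by metis
  obtain u where "\<forall>w\<in>\<phi>. 0 \<le> u w" "sum u \<phi> = 1" "(\<Sum>w\<in>\<phi>. u w *\<^sub>R w) = x"
    using convex_hull_finite[OF fin] assms(3) by auto
  from bc_ext[OF assms(1,2) this(2,3) assms(4)] assms(5) show ?thesis by simp
qed

lemma bc_common:
  assumes "sx \<sigma>" "sx \<tau>" "x \<in> convex hull (\<sigma> \<inter> \<tau>)" "v \<in> \<sigma> \<inter> \<tau>"
  shows "bary_coord \<sigma> v x = bary_coord \<tau> v x"
proof -
  have fin: "finite (\<sigma> \<inter> \<tau>)" using assms sx_def by auto
  obtain u where u: "sum u (\<sigma> \<inter> \<tau>) = 1" "(\<Sum>w\<in>\<sigma> \<inter> \<tau>. u w *\<^sub>R w) = x"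
    using convex_hull_finite[OF fin] assms(3) by auto
  have "bary_coord \<sigma> v x = u v" using bc_ext[OF assms(1) _ u, of v] assms(4) by simp
  moreover have "bary_coord \<tau> v x = u v" using bc_ext[OF assms(2) _ u, of v] assms(4) by simp
  ultimately show ?thesis by simp
qed

lemma bc_vertex:
  assumes "sx \<sigma>" "v \<in> \<sigma>" "u \<in> \<sigma>"
  shows "bary_coord \<sigma> u v = (if u = v then 1 else 0)"
proof -
  have "sum (\<lambda>w. 1::real) {v} = 1" by simp
  moreover have "(\<Sum>w\<in>{v}. (1::real) *\<^sub>R w) = v" by simp
  ultimately have "bary_coord \<sigma> u v = (if u \<in> {v} then 1 else 0)"
    using bc_ext[OF assms(1), of "{v}" "\<lambda>w. 1" v u] assms by simp
  then show ?thesis by simp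
qed

lemma dist_le_longest:
  assumes "finite \<sigma>" "v \<in> \<sigma>" "x \<in> convex hull \<sigma>"
  shows "dist x v \<le> longest_edge \<sigma>"
proof -
  have fin: "finite {dist x y | x y. x \<in> \<sigma> \<and> y \<in> \<sigma>}"
  proof -
    have "{dist x y | x y. x \<in> \<sigma> \<and> y \<in> \<sigma>} = (\<lambda>(x,y). dist x y) ` (\<sigma> \<times> \<sigma>)" by auto
    then show ?thesis using assms(1) by simp
  qed
  have "\<sigma> \<subseteq> cball v (longest_edge \<sigma>)"
  proof
    fix u assume "u \<in> \<sigma>"
    then have "dist v u \<in> {dist x y | x y. x \<in> \<sigma> \<and> y \<in> \<sigma>}" using assms(2) by blast
    then have "dist v u \<le> longest_edge \<sigma>" unfolding longest_edge_def using fin by (rule Max_ge[rotated])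
    then show "u \<in> cball v (longest_edge \<sigma>)" by simp
  qed
  then have "convex hull \<sigma> \<subseteq> cball v (longest_edge \<sigma>)"
    by (rule hull_minimal) (rule convex_cball)
  then show ?thesis using assms(3) by (auto simp: dist_commute)
qed

lemma alt_le:
  assumes "finite \<sigma>" "v \<in> \<sigma>"
  shows "smallest_altitude \<sigma> \<le> infdist v (affine hull (\<sigma> - {v}))"
  unfolding smallest_altitude_def using assms by (intro Min_le) auto

lemma cover_lip:
  fixes g :: "real \<Rightarrow> real"
  assumes "finite \<F>" "\<forall>I\<in>\<F>. closed I" "\<forall>I\<in>\<F>. \<forall>s\<in>I. \<forall>t\<in>I. \<bar>g s - g t\<bar> \<le> K * \<bar>s - t\<bar>"
  shows "{a..b} \<subseteq> \<Union>\<F> \<Longrightarrow> a \<le> b \<Longrightarrow> \<bar>g a - g b\<bar> \<le> K * (b - a)"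
  using assms
proof (induction \<F> arbitrary: a b rule: finite_induct)
  case empty
  then show ?case by auto
next
  case (insert I \<F>)
  have clF: "closed (\<Union>\<F>)" using insert by (intro closed_Union) auto
  have clI: "closed I" using insert by auto
  have lipI: "\<forall>s\<in>I. \<forall>t\<in>I. \<bar>g s - g t\<bar> \<le> K * \<bar>s - t\<bar>" using insert by auto
  have IH: "\<And>a b. {a..b} \<subseteq> \<Union>\<F> \<Longrightarrow> a \<le> b \<Longrightarrow> \<bar>g a - g b\<bar> \<le> K * (b - a)"
    using insert by auto
  define J where "J = I \<inter> {a..b}"
  show ?case
  proof (cases "J = {}")
    case True
    then have "{a..b} \<subseteq> \<Union>\<F>" using insert(4) J_def by auto
    then show ?thesis using IH insert(5) by blast
  next
    case False
    have clJ: "closed J" unfolding J_def using clI by (intro closed_Int) auto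
    have bdJ: "bdd_below J" "bdd_above J" unfolding J_def by (auto intro: bdd_belowI[of _ a] bdd_aboveI[of _ b])
    define c where "c = Inf J"
    define d where "d = Sup J"
    have cJ: "c \<in> J" unfolding c_def using closed_contains_Inf[OF False bdJ(1) clJ] .
    have dJ: "d \<in> J" unfolding d_def using closed_contains_Sup[OF False bdJ(2) clJ] .
    have cd: "c \<le> d" unfolding c_def d_def using cJ bdJ by (meson cInf_lower cSup_upper order.trans)
    have ac: "a \<le> c" "d \<le> b" using cJ dJ J_def by auto
    have c_d: "\<bar>g c - g d\<bar> \<le> K * (d - c)" using lipI cJ dJ cd J_def by force
    have a_c: "\<bar>g a - g c\<bar> \<le> K * (c - a)"
    proof (cases "a < c")
      case True
      have "{a..<c} \<subseteq> \<Union>\<F>"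
      proof
        fix t assume t: "t \<in> {a..<c}"
        have "t \<notin> I"
        proof
          assume "t \<in> I"
          then have "t \<in> J" using t ac cd J_def by auto
          then have "c \<le> t" unfolding c_def using bdJ by (simp add: cInf_lower)
          then show False using t by auto
        qed
        moreover have "t \<in> {a..b}" using t ac cd by auto
        ultimately show "t \<in> \<Union>\<F>" using insert(4) by blast
      qed
      then have "closure {a..<c} \<subseteq> \<Union>\<F>" using clF by (rule closure_minimal)
      then have "{a..c} \<subseteq> \<Union>\<F>" using True by simp
      then show ?thesis using IH True by auto
    next
      case False then show ?thesis using ac by auto
    qed
    have d_b: "\<bar>g d - g b\<bar> \<le> K * (b - d)"
    proof (cases "d < b")
      case True
      have "{d<..b} \<subseteq> \<Union>\<F>"
      proof
        fix t assume t: "t \<in> {d<..b}"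
        have "t \<notin> I"
        proof
          assume "t \<in> I"
          then have "t \<in> J" using t ac cd J_def by auto
          then have "t \<le> d" unfolding d_def using bdJ by (simp add: cSup_upper)
          then show False using t by auto
        qed
        moreover have "t \<in> {a..b}" using t ac cd by auto
        ultimately show "t \<in> \<Union>\<F>" using insert(4) by blast
      qed
      then have "closure {d<..b} \<subseteq> \<Union>\<F>" using clF by (rule closure_minimal)
      then have "{d..b} \<subseteq> \<Union>\<F>" using True by simp
      then show ?thesis using IH True by auto
    next
      case False then show ?thesis using ac by auto
    qed
    have "\<bar>g a - g b\<bar> \<le> \<bar>g a - g c\<bar> + \<bar>g c - g d\<bar> + \<bar>g d - g b\<bar>" by linarith
    also have "\<dots> \<le> K * (c - a) + K * (d - c) + K * (b - d)" using a_c c_d d_b by linarith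
    also have "\<dots> = K * (b - a)" by (simp add: algebra_simps)
    finally show ?thesis .
  qed
qed

lemma open_diff_closed_empty_interior:
  fixes U :: "'a::real_normed_vector set"
  assumes "finite \<F>" "open U" "U \<noteq> {}" "\<forall>C\<in>\<F>. closed C \<and> interior C = {}"
  shows "U - \<Union>\<F> \<noteq> {}"
  using assms
proof (induction \<F> arbitrary: U rule: finite_induct)
  case empty then show ?case by simp
next
  case (insert C \<F>)
  have "open (U - C)" using insert by (intro open_Diff) auto
  moreover have "U - C \<noteq> {}"
  proof
    assume "U - C = {}"
    then have "U \<subseteq> C" by auto
    then have "U \<subseteq> interior C" using insert(4) by (rule interior_maximal)
    then show False using insert by auto
  qed
  ultimately have "(U - C) - \<Union>\<F> \<noteq> {}" using insert by auto
  then show ?case by auto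
qed





locale star_ctx =
  fixes K :: "(real^'m) set set" and p :: "real^'m" and A :: real
  assumes sc: "simplicial_complex K"
    and ptop: "\<And>\<sigma>. \<sigma> \<in> top_simplices K \<Longrightarrow> p \<in> \<sigma>"
    and alt: "\<And>\<sigma>. \<sigma> \<in> top_simplices K \<Longrightarrow> A \<le> smallest_altitude \<sigma>"
    and Apos: "0 < A"
    and nobd: "{p} \<notin> boundary_complex K"
begin

lemma sc_fin: "finite K" using sc unfolding simplicial_complex_def by (elim conjE) assumption
lemma sc_simp: "\<forall>\<sigma>\<in>K. finite \<sigma> \<and> \<sigma> \<noteq> {} \<and> \<not> affine_dependent \<sigma>"
  using sc unfolding simplicial_complex_def by (elim conjE) assumption
lemma sc_face: "\<forall>\<sigma>\<in>K. \<forall>\<tau>. \<tau> \<subseteq> \<sigma> \<and> \<tau> \<noteq> {} \<longrightarrow> \<tau> \<in> K"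
  using sc unfolding simplicial_complex_def by (elim conjE) assumption
lemma sc_int: "\<forall>\<sigma>\<in>K. \<forall>\<tau>\<in>K. convex hull \<sigma> \<inter> convex hull \<tau> = convex hull (\<sigma> \<inter> \<tau>)"
  using sc unfolding simplicial_complex_def by (elim conjE) assumption

definition S where "S = (\<Union>\<sigma>\<in>top_simplices K. convex hull \<sigma>)"
definition Lam where "Lam q = bary_coord (SOME \<sigma>. \<sigma> \<in> top_simplices K \<and> q \<in> convex hull \<sigma>) p q"
definition Q where "Q = \<Union>{convex hull \<rho> | \<rho>. \<exists>\<sigma>\<in>top_simplices K. \<rho> \<subseteq> \<sigma> \<and> card \<rho> < CARD('m)}"

lemma T_props:
  assumes "\<sigma> \<in> top_simplices K"
  shows "\<sigma> \<in> K" "card \<sigma> = CARD('m) + 1" "finite \<sigma>" "\<not> affine_dependent \<sigma>" "sx \<sigma>"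
proof -
  show k: "\<sigma> \<in> K" and c: "card \<sigma> = CARD('m) + 1" using assms top_simplices_def by auto
  show f: "finite \<sigma>" and i: "\<not> affine_dependent \<sigma>" using sc_simp k by auto
  show "sx \<sigma>" by (rule sx_top[OF f i c])
qed

lemma finT: "finite (top_simplices K)"
proof -
  have "finite K" by (rule sc_fin)
  moreover have "top_simplices K \<subseteq> K" unfolding top_simplices_def by auto
  ultimately show ?thesis by (rule finite_subset[rotated])
qed

lemma lipT:
  assumes "\<sigma> \<in> top_simplices K" "v \<in> \<sigma>"
  shows "A * \<bar>bary_coord \<sigma> v x - bary_coord \<sigma> v y\<bar> \<le> dist x y"
proof -
  have "A \<le> infdist v (affine hull (\<sigma> - {v}))"
    using alt[OF assms(1)] alt_le[OF T_props(3)[OF assms(1)] assms(2)] by linarith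
  then have "A * \<bar>bary_coord \<sigma> v x - bary_coord \<sigma> v y\<bar> \<le> infdist v (affine hull (\<sigma> - {v})) * \<bar>bary_coord \<sigma> v x - bary_coord \<sigma> v y\<bar>"
    by (rule mult_right_mono) simp
  also have "\<dots> \<le> dist x y" by (rule bc_lip[OF T_props(5)[OF assms(1)] assms(2)])
  finally show ?thesis .
qed

lemma Lam_eq:
  assumes "\<sigma> \<in> top_simplices K" "q \<in> convex hull \<sigma>"
  shows "Lam q = bary_coord \<sigma> p q"
proof -
  have ex: "\<exists>\<sigma>. \<sigma> \<in> top_simplices K \<and> q \<in> convex hull \<sigma>" using assms by (intro exI[of _ \<sigma>]) simp
  let ?\<tau> = "SOME \<sigma>. \<sigma> \<in> top_simplices K \<and> q \<in> convex hull \<sigma>"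
  have \<tau>: "?\<tau> \<in> top_simplices K \<and> q \<in> convex hull ?\<tau>" using someI_ex[OF ex] by simp
  have inter: "\<forall>\<sigma>\<in>K. \<forall>\<tau>\<in>K. convex hull \<sigma> \<inter> convex hull \<tau> = convex hull (\<sigma> \<inter> \<tau>)"
    by (rule sc_int)
  have k1: "\<sigma> \<in> K" using T_props(1)[OF assms(1)] .
  have k2: "?\<tau> \<in> K" using T_props(1) \<tau> by blast
  have "convex hull \<sigma> \<inter> convex hull ?\<tau> = convex hull (\<sigma> \<inter> ?\<tau>)"
    using inter k1 k2 by blast
  then have qi: "q \<in> convex hull (\<sigma> \<inter> ?\<tau>)" using assms \<tau> by auto
  have pi: "p \<in> \<sigma> \<inter> ?\<tau>" using ptop assms(1) \<tau> by simp
  have sx2: "sx ?\<tau>" using T_props(5) \<tau> by blast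
  have "bary_coord \<sigma> p q = bary_coord ?\<tau> p q"
    by (rule bc_common[OF T_props(5)[OF assms(1)] sx2 qi pi])
  then show ?thesis unfolding Lam_def by simp
qed

lemma T_closed: "\<sigma> \<in> top_simplices K \<Longrightarrow> closed (convex hull \<sigma>)"
proof -
  assume "\<sigma> \<in> top_simplices K"
  then have "finite \<sigma>" by (rule T_props(3))
  then have "compact \<sigma>" by (rule finite_imp_compact)
  then have "compact (convex hull \<sigma>)" by (rule compact_convex_hull)
  then show "closed (convex hull \<sigma>)" by (rule compact_imp_closed)
qed

lemma S_closed: "closed S"
  unfolding S_def using finT T_closed by (intro closed_UN) auto

lemma loc_lip:
  assumes "w \<in> S"
  shows "\<exists>r>0. \<forall>q\<in>S. dist q w < r \<longrightarrow> A * \<bar>Lam q - Lam w\<bar> \<le> dist q w"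
proof -
  define C where "C = (\<Union>\<tau>\<in>{\<tau>\<in>top_simplices K. w \<notin> convex hull \<tau>}. convex hull \<tau>)"
  have "closed C" unfolding C_def using finT T_closed by (intro closed_UN) auto
  moreover have "w \<notin> C" unfolding C_def by auto
  ultimately obtain r where r: "r > 0" "ball w r \<subseteq> - C"
    using open_contains_ball[of "- C"] by (auto simp: open_Compl)
  have "\<forall>q\<in>S. dist q w < r \<longrightarrow> A * \<bar>Lam q - Lam w\<bar> \<le> dist q w"
  proof (intro ballI impI)
    fix q assume q: "q \<in> S" "dist q w < r"
    then obtain \<tau> where \<tau>: "\<tau> \<in> top_simplices K" "q \<in> convex hull \<tau>" unfolding S_def by auto
    have "q \<in> ball w r" using q(2) by (simp add: dist_commute)
    then have "q \<notin> C" using r by auto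
    then have w\<tau>: "w \<in> convex hull \<tau>" using \<tau> unfolding C_def by auto
    have "Lam q = bary_coord \<tau> p q" "Lam w = bary_coord \<tau> p w" using Lam_eq \<tau> w\<tau> by auto
    then show "A * \<bar>Lam q - Lam w\<bar> \<le> dist q w" using lipT[OF \<tau>(1) ptop[OF \<tau>(1)]] by simp
  qed
  then show ?thesis using r by blast
qed

lemma pos_interior:
  assumes "\<sigma> \<in> top_simplices K" "0 < \<mu>" "\<forall>v\<in>\<sigma>. \<mu> \<le> bary_coord \<sigma> v w"
  shows "ball w (A * \<mu>) \<subseteq> convex hull \<sigma>"
proof
  fix q assume "q \<in> ball w (A * \<mu>)"
  then have dq: "dist q w < A * \<mu>" by (simp add: dist_commute)
  have "\<forall>v\<in>\<sigma>. 0 \<le> bary_coord \<sigma> v q"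
  proof
    fix v assume v: "v \<in> \<sigma>"
    have "A * \<bar>bary_coord \<sigma> v q - bary_coord \<sigma> v w\<bar> \<le> dist q w" by (rule lipT[OF assms(1) v])
    then have "A * \<bar>bary_coord \<sigma> v q - bary_coord \<sigma> v w\<bar> < A * \<mu>" using dq by linarith
    then have "\<bar>bary_coord \<sigma> v q - bary_coord \<sigma> v w\<bar> < \<mu>" using Apos by (simp add: mult_less_cancel_left_pos)
    moreover have "\<mu> \<le> bary_coord \<sigma> v w" using assms(3) v by blast
    ultimately show "0 \<le> bary_coord \<sigma> v q" by linarith
  qed
  then show "q \<in> convex hull \<sigma>" using bc_conv[OF T_props(5)[OF assms(1)]] by blast
qed

lemma interior_pt:
  assumes wS: "w \<in> S" and wQ: "w \<notin> Q" and wL: "Lam w > 0"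
  shows "\<exists>r>0. ball w r \<subseteq> S"
proof -
  obtain \<sigma> where \<sigma>T: "\<sigma> \<in> top_simplices K" and w\<sigma>: "w \<in> convex hull \<sigma>" using wS unfolding S_def by auto
  note \<sigma>p = T_props[OF \<sigma>T]
  have sx\<sigma>: "sx \<sigma>" by (rule \<sigma>p(5))
  have nn: "\<forall>v\<in>\<sigma>. 0 \<le> bary_coord \<sigma> v w" using bc_conv[OF sx\<sigma>] w\<sigma> by blast
  define \<phi> where "\<phi> = {v\<in>\<sigma>. 0 < bary_coord \<sigma> v w}"
  have \<phi>\<sigma>: "\<phi> \<subseteq> \<sigma>" unfolding \<phi>_def by auto
  have fin\<phi>: "finite \<phi>" using \<phi>\<sigma> \<sigma>p(3) finite_subset by blast
  have p\<sigma>: "p \<in> \<sigma>" by (rule ptop[OF \<sigma>T])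
  have p\<phi>: "p \<in> \<phi>" using Lam_eq[OF \<sigma>T w\<sigma>] wL p\<sigma> unfolding \<phi>_def by simp
  have zero_out: "\<forall>v\<in>\<sigma> - \<phi>. bary_coord \<sigma> v w = 0" using nn unfolding \<phi>_def by force
  have s1: "(\<Sum>v\<in>\<phi>. bary_coord \<sigma> v w) = 1"
  proof -
    have "(\<Sum>v\<in>\<sigma>. bary_coord \<sigma> v w) = (\<Sum>v\<in>\<phi>. bary_coord \<sigma> v w)"
      by (rule sum.mono_neutral_right[OF \<sigma>p(3) \<phi>\<sigma>]) (use zero_out in auto)
    then show ?thesis using bc_sum[OF sx\<sigma>] by simp
  qed
  have s2: "(\<Sum>v\<in>\<phi>. bary_coord \<sigma> v w *\<^sub>R v) = w"
  proof -
    have "(\<Sum>v\<in>\<sigma>. bary_coord \<sigma> v w *\<^sub>R v) = (\<Sum>v\<in>\<phi>. bary_coord \<sigma> v w *\<^sub>R v)"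
      by (rule sum.mono_neutral_right[OF \<sigma>p(3) \<phi>\<sigma>]) (use zero_out in auto)
    then show ?thesis using bc_rep[OF sx\<sigma>] by simp
  qed
  have w\<phi>: "w \<in> convex hull \<phi>"
  proof -
    have "w \<in> {y. \<exists>u. (\<forall>x\<in>\<phi>. 0 \<le> u x) \<and> sum u \<phi> = 1 \<and> sum (\<lambda>x. u x *\<^sub>R x) \<phi> = y}"
      by (rule CollectI, rule exI[of _ "\<lambda>v. bary_coord \<sigma> v w"]) (use s1 s2 nn \<phi>\<sigma> in auto)
    then show ?thesis using convex_hull_finite[OF fin\<phi>] by simp
  qed
  have card\<phi>: "CARD('m) \<le> card \<phi>"
  proof (rule ccontr)
    assume "\<not> CARD('m) \<le> card \<phi>"
    then have "card \<phi> < CARD('m)" by simp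
    then have "convex hull \<phi> \<in> {convex hull \<rho> | \<rho>. \<exists>\<sigma>\<in>top_simplices K. \<rho> \<subseteq> \<sigma> \<and> card \<rho> < CARD('m)}"
      using \<sigma>T \<phi>\<sigma> by blast
    then have "w \<in> Q" unfolding Q_def using w\<phi> by blast
    then show False using wQ by simp
  qed
  define \<mu> where "\<mu> = Min ((\<lambda>v. bary_coord \<sigma> v w) ` \<phi>)"
  have \<mu>pos: "0 < \<mu>"
  proof -
    have ne: "(\<lambda>v. bary_coord \<sigma> v w) ` \<phi> \<noteq> {}" using p\<phi> by auto
    have fi: "finite ((\<lambda>v. bary_coord \<sigma> v w) ` \<phi>)" using fin\<phi> by simp
    have "\<forall>a\<in>(\<lambda>v. bary_coord \<sigma> v w) ` \<phi>. 0 < a" unfolding \<phi>_def by auto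
    then show ?thesis unfolding \<mu>_def using Min_gr_iff[OF fi ne] by blast
  qed
  have \<mu>le: "\<And>v. v \<in> \<phi> \<Longrightarrow> \<mu> \<le> bary_coord \<sigma> v w" unfolding \<mu>_def using fin\<phi> by simp
  have Apos': "0 < A * \<mu>" using Apos \<mu>pos by simp
  show ?thesis
  proof (cases "\<phi> = \<sigma>")
    case True
    have "ball w (A * \<mu>) \<subseteq> convex hull \<sigma>" using pos_interior[OF \<sigma>T \<mu>pos] \<mu>le True by blast
    then have "ball w (A * \<mu>) \<subseteq> S" unfolding S_def using \<sigma>T by blast
    then show ?thesis using Apos' by blast
  next
    case False
    then have "\<phi> \<subset> \<sigma>" using \<phi>\<sigma> by auto
    then have "card \<phi> < card \<sigma>" using \<sigma>p(3) by (rule psubset_card_mono[rotated])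
    then have card\<phi>m: "card \<phi> = CARD('m)" using card\<phi> \<sigma>p(2) by simp
    have "card (\<sigma> - \<phi>) = 1" using card_Diff_subset[OF fin\<phi> \<phi>\<sigma>] card\<phi>m \<sigma>p(2) by simp
    then obtain v0 where v0: "\<sigma> - \<phi> = {v0}" by (rule card_1_singletonE)
    then have v0\<sigma>: "v0 \<in> \<sigma>" and v0\<phi>: "v0 \<notin> \<phi>" and \<sigma>eq: "\<sigma> = insert v0 \<phi>" using \<phi>\<sigma> by auto
    have faces: "\<forall>\<sigma>\<in>K. \<forall>\<tau>. \<tau> \<subseteq> \<sigma> \<and> \<tau> \<noteq> {} \<longrightarrow> \<tau> \<in> K"
      by (rule sc_face)
    have "\<phi> \<noteq> {}" using p\<phi> by auto
    then have \<phi>K: "\<phi> \<in> K" using faces \<sigma>p(1) \<phi>\<sigma> by simp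
    have notone: "card {\<sigma>'\<in>top_simplices K. \<phi> \<subseteq> \<sigma>'} \<noteq> 1"
    proof
      assume h: "card {\<sigma>'\<in>top_simplices K. \<phi> \<subseteq> \<sigma>'} = 1"
      have "\<exists>\<rho>\<in>K. card \<rho> = CARD('m) \<and> card {\<sigma>\<in>top_simplices K. \<rho> \<subseteq> \<sigma>} = 1 \<and> {p} \<subseteq> \<rho>"
        by (rule bexI[OF _ \<phi>K]) (use card\<phi>m h p\<phi> in simp)
      then have "{p} \<noteq> {} \<and> (\<exists>\<rho>\<in>K. card \<rho> = CARD('m) \<and> card {\<sigma>\<in>top_simplices K. \<rho> \<subseteq> \<sigma>} = 1 \<and> {p} \<subseteq> \<rho>)"
        by (intro conjI) simp_all
      then have "{p} \<in> boundary_complex K" unfolding boundary_complex_def mem_Collect_eq .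
      with nobd show False by (rule notE)
    qed
    obtain \<sigma>' where \<sigma>'T: "\<sigma>' \<in> top_simplices K" and \<phi>\<sigma>': "\<phi> \<subseteq> \<sigma>'" and \<sigma>'ne: "\<sigma>' \<noteq> \<sigma>"
    proof -
      have "\<exists>\<sigma>'. \<sigma>' \<in> top_simplices K \<and> \<phi> \<subseteq> \<sigma>' \<and> \<sigma>' \<noteq> \<sigma>"
      proof (rule ccontr)
        assume nx: "\<not> (\<exists>\<sigma>'. \<sigma>' \<in> top_simplices K \<and> \<phi> \<subseteq> \<sigma>' \<and> \<sigma>' \<noteq> \<sigma>)"
        have "{\<sigma>'\<in>top_simplices K. \<phi> \<subseteq> \<sigma>'} = {\<sigma>}"
        proof (rule set_eqI, rule iffI)
          fix x assume "x \<in> {\<sigma>'\<in>top_simplices K. \<phi> \<subseteq> \<sigma>'}"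
          then have x1: "x \<in> top_simplices K" and x2: "\<phi> \<subseteq> x" by simp_all
          have "x = \<sigma>"
          proof (rule ccontr)
            assume "x \<noteq> \<sigma>"
            then have "\<exists>\<sigma>'. \<sigma>' \<in> top_simplices K \<and> \<phi> \<subseteq> \<sigma>' \<and> \<sigma>' \<noteq> \<sigma>" using x1 x2 by (intro exI[of _ x]) simp
            with nx show False by (rule notE)
          qed
          then show "x \<in> {\<sigma>}" by simp
        next
          fix x assume "x \<in> {\<sigma>}" then show "x \<in> {\<sigma>'\<in>top_simplices K. \<phi> \<subseteq> \<sigma>'}" using \<sigma>T \<phi>\<sigma> by simp
        qed
        then have "card {\<sigma>'\<in>top_simplices K. \<phi> \<subseteq> \<sigma>'} = 1" by simp
        with notone show False by (rule notE)
      qed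
      then obtain \<sigma>'' where "\<sigma>'' \<in> top_simplices K" "\<phi> \<subseteq> \<sigma>''" "\<sigma>'' \<noteq> \<sigma>" by (elim exE conjE)
      then show ?thesis by (rule that)
    qed
    note \<sigma>'p = T_props[OF \<sigma>'T]
    have sx\<sigma>': "sx \<sigma>'" by (rule \<sigma>'p(5))
    have v0\<sigma>': "v0 \<notin> \<sigma>'"
    proof
      assume "v0 \<in> \<sigma>'"
      then have "\<sigma> \<subseteq> \<sigma>'" using \<sigma>eq \<phi>\<sigma>' by auto
      then have "\<sigma> = \<sigma>'" using card_seteq[OF \<sigma>'p(3)] \<sigma>p(2) \<sigma>'p(2) by simp
      then show False using \<sigma>'ne by simp
    qed
    have "card (\<sigma>' - \<phi>) = 1" using card_Diff_subset[OF fin\<phi> \<phi>\<sigma>'] card\<phi>m \<sigma>'p(2) by simp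
    then obtain v1 where v1: "\<sigma>' - \<phi> = {v1}" by (rule card_1_singletonE)
    then have v1\<sigma>': "v1 \<in> \<sigma>'" and v1\<phi>: "v1 \<notin> \<phi>" and \<sigma>'eq: "\<sigma>' = insert v1 \<phi>" using \<phi>\<sigma>' by auto
    have int: "\<sigma> \<inter> \<sigma>' = \<phi>" using \<sigma>eq \<phi>\<sigma>' v0\<sigma>' by auto
    have inter: "\<forall>\<sigma>\<in>K. \<forall>\<tau>\<in>K. convex hull \<sigma> \<inter> convex hull \<tau> = convex hull (\<sigma> \<inter> \<tau>)"
      by (rule sc_int)
    have hulls: "convex hull \<sigma> \<inter> convex hull \<sigma>' = convex hull \<phi>"
      using inter \<sigma>p(1) \<sigma>'p(1) int by simp
    have wi: "w \<in> convex hull (\<sigma> \<inter> \<sigma>')" using int w\<phi> by simp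
    have same: "bary_coord \<sigma>' u w = bary_coord \<sigma> u w" if u: "u \<in> \<phi>" for u
    proof -
      have "u \<in> \<sigma> \<inter> \<sigma>'" using int u by simp
      from bc_common[OF sx\<sigma> sx\<sigma>' wi this] show ?thesis by simp
    qed
    have gw: "bary_coord \<sigma>' v1 w = 0" by (rule bc_hull_face[OF sx\<sigma>' \<phi>\<sigma>' w\<phi> v1\<sigma>' v1\<phi>])
    have fw: "bary_coord \<sigma> v0 w = 0" by (rule bc_hull_face[OF sx\<sigma> \<phi>\<sigma> w\<phi> v0\<sigma> v0\<phi>])
    have fv0: "bary_coord \<sigma> v0 v0 = 1" using bc_vertex[OF sx\<sigma> v0\<sigma> v0\<sigma>] by simp
    have gneg: "bary_coord \<sigma>' v1 v0 < 0"
    proof (rule ccontr)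
      assume "\<not> bary_coord \<sigma>' v1 v0 < 0"
      then have g0: "0 \<le> bary_coord \<sigma>' v1 v0" by simp
      define D where "D = dist w v0 + 1"
      have Dpos: "0 < D" unfolding D_def using zero_le_dist[of w v0] by linarith
      define s where "s = min (1/2) (A * \<mu> / (2 * D))"
      have spos: "0 < s" unfolding s_def using Apos' Dpos by simp
      have sle: "s \<le> 1/2" unfolding s_def by simp
      have sD: "s * D \<le> A * \<mu> / 2"
      proof -
        have "s \<le> A * \<mu> / (2 * D)" unfolding s_def by simp
        then have "s * D \<le> A * \<mu> / (2 * D) * D" by (rule mult_right_mono) (use Dpos in simp)
        also have "\<dots> = A * \<mu> / 2" using Dpos by (simp add: field_simps)
        finally show ?thesis .
      qed
      define q where "q = (1 - s) *\<^sub>R w + s *\<^sub>R v0"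
      have dq: "dist q w = s * dist w v0"
      proof -
        have "q - w = s *\<^sub>R (v0 - w)" unfolding q_def by (simp add: algebra_simps)
        then show ?thesis using spos by (simp add: dist_norm norm_minus_commute)
      qed
      have dqlt: "dist q w < A * \<mu>"
      proof -
        have "s * dist w v0 < s * D" using spos unfolding D_def by simp
        then show ?thesis using dq sD Apos' by linarith
      qed
      have q\<sigma>: "q \<in> convex hull \<sigma>" unfolding q_def
        by (rule convexD[OF convex_convex_hull w\<sigma> hull_inc[OF v0\<sigma>]]) (use spos sle in auto)
      have q\<sigma>': "q \<in> convex hull \<sigma>'"
      proof -
        have "\<forall>u\<in>\<sigma>'. 0 \<le> bary_coord \<sigma>' u q"
        proof
          fix u assume u: "u \<in> \<sigma>'"
          show "0 \<le> bary_coord \<sigma>' u q"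
          proof (cases "u = v1")
            case True
            have "bary_coord \<sigma>' u q = (1 - s) * bary_coord \<sigma>' u w + s * bary_coord \<sigma>' u v0"
              unfolding q_def by (rule bc_comb2[OF sx\<sigma>' u]) simp
            then show ?thesis using True gw g0 spos by simp
          next
            case False
            then have u\<phi>: "u \<in> \<phi>" using u \<sigma>'eq by auto
            have "A * \<bar>bary_coord \<sigma>' u q - bary_coord \<sigma>' u w\<bar> \<le> dist q w" by (rule lipT[OF \<sigma>'T u])
            then have "A * \<bar>bary_coord \<sigma>' u q - bary_coord \<sigma>' u w\<bar> < A * \<mu>" using dqlt by linarith
            then have "\<bar>bary_coord \<sigma>' u q - bary_coord \<sigma>' u w\<bar> < \<mu>" using Apos by (simp add: mult_less_cancel_left_pos)
            moreover have "\<mu> \<le> bary_coord \<sigma>' u w" using \<mu>le[OF u\<phi>] same[OF u\<phi>] by simp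
            ultimately show ?thesis by linarith
          qed
        qed
        then show ?thesis using bc_conv[OF sx\<sigma>'] by blast
      qed
      have "q \<in> convex hull \<phi>" using q\<sigma> q\<sigma>' hulls by blast
      then have "bary_coord \<sigma> v0 q = 0" by (rule bc_hull_face[OF sx\<sigma> \<phi>\<sigma> _ v0\<sigma> v0\<phi>])
      moreover have "bary_coord \<sigma> v0 q = (1 - s) * bary_coord \<sigma> v0 w + s * bary_coord \<sigma> v0 v0"
        unfolding q_def by (rule bc_comb2[OF sx\<sigma> v0\<sigma>]) simp
      ultimately show False using fw fv0 spos by simp
    qed
    have rel: "\<And>q. bary_coord \<sigma>' v1 q = bary_coord \<sigma>' v1 v0 * bary_coord \<sigma> v0 q"
    proof -
      fix q
      have "bary_coord \<sigma>' v1 q = bary_coord \<sigma>' v1 (\<Sum>u\<in>\<sigma>. bary_coord \<sigma> u q *\<^sub>R id u)"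
        using bc_rep[OF sx\<sigma>, of q] by simp
      also have "\<dots> = (\<Sum>u\<in>\<sigma>. bary_coord \<sigma> u q * bary_coord \<sigma>' v1 (id u))"
        by (rule bc_affsum[OF sx\<sigma>' v1\<sigma>' \<sigma>p(3) bc_sum[OF sx\<sigma>]])
      also have "\<dots> = bary_coord \<sigma> v0 q * bary_coord \<sigma>' v1 v0 + (\<Sum>u\<in>\<phi>. bary_coord \<sigma> u q * bary_coord \<sigma>' v1 u)"
        using \<sigma>eq fin\<phi> v0\<phi> by simp
      also have "(\<Sum>u\<in>\<phi>. bary_coord \<sigma> u q * bary_coord \<sigma>' v1 u) = 0"
      proof (rule sum.neutral, rule ballI)
        fix u assume u: "u \<in> \<phi>"
        have "bary_coord \<sigma>' v1 u = 0" using bc_vertex[OF sx\<sigma>' _ v1\<sigma>', of u] u \<phi>\<sigma>' v1\<phi> by auto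
        then show "bary_coord \<sigma> u q * bary_coord \<sigma>' v1 u = 0" by simp
      qed
      finally show "bary_coord \<sigma>' v1 q = bary_coord \<sigma>' v1 v0 * bary_coord \<sigma> v0 q" by simp
    qed
    have "ball w (A * \<mu>) \<subseteq> S"
    proof
      fix q assume "q \<in> ball w (A * \<mu>)"
      then have dq: "dist q w < A * \<mu>" by (simp add: dist_commute)
      have pos: "0 < bary_coord \<sigma> u q \<and> 0 < bary_coord \<sigma>' u q" if u: "u \<in> \<phi>" for u
      proof -
        have "A * \<bar>bary_coord \<sigma> u q - bary_coord \<sigma> u w\<bar> \<le> dist q w" using lipT[OF \<sigma>T] u \<phi>\<sigma> by blast
        then have "A * \<bar>bary_coord \<sigma> u q - bary_coord \<sigma> u w\<bar> < A * \<mu>" using dq by linarith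
        then have a1: "\<bar>bary_coord \<sigma> u q - bary_coord \<sigma> u w\<bar> < \<mu>" using Apos by (simp add: mult_less_cancel_left_pos)
        have "A * \<bar>bary_coord \<sigma>' u q - bary_coord \<sigma>' u w\<bar> \<le> dist q w" using lipT[OF \<sigma>'T] u \<phi>\<sigma>' by blast
        then have "A * \<bar>bary_coord \<sigma>' u q - bary_coord \<sigma>' u w\<bar> < A * \<mu>" using dq by linarith
        then have a2: "\<bar>bary_coord \<sigma>' u q - bary_coord \<sigma>' u w\<bar> < \<mu>" using Apos by (simp add: mult_less_cancel_left_pos)
        have "\<mu> \<le> bary_coord \<sigma> u w" "\<mu> \<le> bary_coord \<sigma>' u w" using \<mu>le[OF u] same[OF u] by auto
        then show ?thesis using a1 a2 by linarith
      qed
      show "q \<in> S"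
      proof (cases "0 \<le> bary_coord \<sigma> v0 q")
        case True
        have "\<forall>u\<in>\<sigma>. 0 \<le> bary_coord \<sigma> u q"
        proof
          fix u assume u\<sigma>: "u \<in> \<sigma>"
          show "0 \<le> bary_coord \<sigma> u q"
          proof (cases "u = v0")
            case True then show ?thesis using \<open>0 \<le> bary_coord \<sigma> v0 q\<close> by simp
          next
            case False then have "u \<in> \<phi>" using u\<sigma> \<sigma>eq by blast
            then show ?thesis using pos[of u] by simp
          qed
        qed
        then have "q \<in> convex hull \<sigma>" using bc_conv[OF sx\<sigma>] by blast
        then show ?thesis unfolding S_def using \<sigma>T by blast
      next
        case False
        then have "0 < bary_coord \<sigma>' v1 q" using rel[of q] gneg by (simp add: mult_neg_neg)
        then have g1: "0 \<le> bary_coord \<sigma>' v1 q" by simp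
        have "\<forall>u\<in>\<sigma>'. 0 \<le> bary_coord \<sigma>' u q"
        proof
          fix u assume u\<sigma>: "u \<in> \<sigma>'"
          show "0 \<le> bary_coord \<sigma>' u q"
          proof (cases "u = v1")
            case True then show ?thesis using g1 by simp
          next
            case False then have "u \<in> \<phi>" using u\<sigma> \<sigma>'eq by blast
            then show ?thesis using pos[of u] by simp
          qed
        qed
        then have "q \<in> convex hull \<sigma>'" using bc_conv[OF sx\<sigma>'] by blast
        then show ?thesis unfolding S_def using \<sigma>'T by blast
      qed
    qed
    then show ?thesis using Apos' by blast
  qed
qed

lemma seg_bound:
  assumes \<sigma>T: "\<sigma> \<in> top_simplices K" and x'\<sigma>: "x' \<in> convex hull \<sigma>" and yS: "y \<in> S" and Ly: "Lam y = 0"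
    and gen: "\<And>t. 0 \<le> t \<Longrightarrow> t < 1 \<Longrightarrow> x' + t *\<^sub>R (y - x') \<notin> Q"
  shows "A * Lam x' \<le> dist x' y"
proof (cases "x' = y")
  case True then show ?thesis using Ly by simp
next
  case False
  define d where "d = y - x'"
  define nd where "nd = norm d"
  have ndpos: "0 < nd" unfolding nd_def d_def using False by simp
  define seg where "seg t = x' + t *\<^sub>R d" for t
  have seg0: "seg 0 = x'" and seg1: "seg 1 = y" unfolding seg_def d_def by auto
  have dseg: "dist (seg s) (seg t) = \<bar>s - t\<bar> * nd" for s t
  proof -
    have "seg s - seg t = (s - t) *\<^sub>R d" unfolding seg_def by (simp add: algebra_simps)
    then show ?thesis unfolding nd_def by (simp add: dist_norm)
  qed
  have contseg: "continuous (at t) seg" for t unfolding seg_def by (intro continuous_intros)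
  have x'S: "x' \<in> S" unfolding S_def using \<sigma>T x'\<sigma> by blast
  define E where "E = {t\<in>{0..1}. seg t \<notin> S \<or> Lam (seg t) \<le> 0}"
  have E1: "1 \<in> E" unfolding E_def using seg1 Ly by simp
  have bdE: "bdd_below E" unfolding E_def by (auto intro: bdd_belowI[of _ 0])
  define ts where "ts = Inf E"
  have ts0: "0 \<le> ts" unfolding ts_def using E1 by (intro cInf_greatest) (auto simp: E_def)
  have ts1: "ts \<le> 1" unfolding ts_def using E1 bdE by (rule cInf_lower)
  have before: "seg s \<in> S \<and> 0 < Lam (seg s)" if "0 \<le> s" "s < ts" for s
  proof -
    have "s \<notin> E"
    proof
      assume "s \<in> E"
      then have "ts \<le> s" unfolding ts_def using bdE by (rule cInf_lower)
      then show False using that by simp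
    qed
    then show ?thesis using that ts1 unfolding E_def by auto
  qed
  have segS: "seg ts \<in> S"
  proof (cases "ts = 0")
    case True then show ?thesis using seg0 x'S by simp
  next
    case False
    then have tpos: "0 < ts" using ts0 by simp
    have cl: "closed (seg -` S)" by (rule continuous_closed_vimage[OF S_closed contseg])
    have "{0..<ts} \<subseteq> seg -` S" using before by auto
    then have "closure {0..<ts} \<subseteq> seg -` S" using cl by (rule closure_minimal)
    moreover have "ts \<in> closure {0..<ts}" using tpos by simp
    ultimately have "ts \<in> seg -` S" by blast
    then show ?thesis by simp
  qed
  have Lneg: "Lam (seg ts) \<le> 0"
  proof (rule ccontr)
    assume "\<not> Lam (seg ts) \<le> 0"
    then have Lpos: "0 < Lam (seg ts)" by simp
    then have "seg ts \<noteq> y" using Ly by auto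
    then have "ts \<noteq> 1" using seg1 by auto
    then have tslt: "ts < 1" using ts1 by simp
    have "seg ts \<notin> Q" unfolding seg_def d_def using gen ts0 tslt by blast
    then obtain r1 where r1: "r1 > 0" "ball (seg ts) r1 \<subseteq> S" using interior_pt segS Lpos by blast
    obtain r2 where r2: "r2 > 0" "\<forall>q\<in>S. dist q (seg ts) < r2 \<longrightarrow> A * \<bar>Lam q - Lam (seg ts)\<bar> \<le> dist q (seg ts)"
      using loc_lip[OF segS] by blast
    define \<rho> where "\<rho> = min r1 (min r2 (A * Lam (seg ts)))"
    have \<rho>pos: "0 < \<rho>" unfolding \<rho>_def using r1 r2 Apos Lpos by simp
    define \<eta> where "\<eta> = \<rho> / nd"
    have \<eta>pos: "0 < \<eta>" unfolding \<eta>_def using \<rho>pos ndpos by simp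
    have lower: "min 1 (ts + \<eta>) \<le> e" if eE: "e \<in> E" for e
    proof (rule ccontr)
      assume "\<not> min 1 (ts + \<eta>) \<le> e"
      then have e1: "e < 1" and e2: "e < ts + \<eta>" by auto
      have e0: "0 \<le> e" using eE unfolding E_def by auto
      have "ts \<le> e" unfolding ts_def using eE bdE by (rule cInf_lower)
      then have "dist (seg e) (seg ts) = (e - ts) * nd" using dseg[of e ts] by simp
      also have "\<dots> < \<eta> * nd" using e2 ndpos by simp
      also have "\<dots> = \<rho>" unfolding \<eta>_def using ndpos by simp
      finally have de: "dist (seg e) (seg ts) < \<rho>" .
      have "seg e \<in> ball (seg ts) r1" using de unfolding \<rho>_def by (simp add: dist_commute)
      then have segeS: "seg e \<in> S" using r1 by blast
      have "A * \<bar>Lam (seg e) - Lam (seg ts)\<bar> \<le> dist (seg e) (seg ts)"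
        using r2 segeS de unfolding \<rho>_def by simp
      then have "A * \<bar>Lam (seg e) - Lam (seg ts)\<bar> < A * Lam (seg ts)" using de unfolding \<rho>_def by linarith
      then have "\<bar>Lam (seg e) - Lam (seg ts)\<bar> < Lam (seg ts)" using Apos by (simp add: mult_less_cancel_left_pos)
      then have "0 < Lam (seg e)" by linarith
      then show False using eE segeS unfolding E_def by auto
    qed
    have "min 1 (ts + \<eta>) \<le> Inf E" using E1 lower by (intro cInf_greatest) auto
    then have "min 1 (ts + \<eta>) \<le> ts" unfolding ts_def .
    then show False using tslt \<eta>pos by simp
  qed
  define \<F> where "\<F> = (\<lambda>\<tau>. seg -` (convex hull \<tau>)) ` top_simplices K"
  have fF: "finite \<F>" unfolding \<F>_def using finT by simp
  have clF: "\<forall>I\<in>\<F>. closed I"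
  proof
    fix I assume "I \<in> \<F>"
    then obtain \<tau> where \<tau>: "\<tau> \<in> top_simplices K" "I = seg -` (convex hull \<tau>)" unfolding \<F>_def by auto
    have "closed (convex hull \<tau>)"
      using T_props(3)[OF \<tau>(1)] by (metis compact_convex_hull compact_imp_closed finite_imp_compact)
    then have "closed (seg -` (convex hull \<tau>))" by (rule continuous_closed_vimage[OF _ contseg])
    then show "closed I" using \<tau>(2) by simp
  qed
  have lipF: "\<forall>I\<in>\<F>. \<forall>s\<in>I. \<forall>t\<in>I. \<bar>Lam (seg s) - Lam (seg t)\<bar> \<le> (nd / A) * \<bar>s - t\<bar>"
  proof (intro ballI)
    fix I s t assume I: "I \<in> \<F>" and s: "s \<in> I" and t: "t \<in> I"
    then obtain \<tau> where \<tau>: "\<tau> \<in> top_simplices K" "I = seg -` (convex hull \<tau>)" unfolding \<F>_def by auto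
    have "Lam (seg s) = bary_coord \<tau> p (seg s)" "Lam (seg t) = bary_coord \<tau> p (seg t)"
      using Lam_eq[OF \<tau>(1)] s t \<tau>(2) by auto
    moreover have "A * \<bar>bary_coord \<tau> p (seg s) - bary_coord \<tau> p (seg t)\<bar> \<le> dist (seg s) (seg t)"
      by (rule lipT[OF \<tau>(1) ptop[OF \<tau>(1)]])
    then have "A * \<bar>bary_coord \<tau> p (seg s) - bary_coord \<tau> p (seg t)\<bar> \<le> \<bar>s - t\<bar> * nd"
      using dseg[of s t] by simp
    ultimately have "A * \<bar>Lam (seg s) - Lam (seg t)\<bar> \<le> \<bar>s - t\<bar> * nd" by simp
    then show "\<bar>Lam (seg s) - Lam (seg t)\<bar> \<le> (nd / A) * \<bar>s - t\<bar>"
      using Apos by (simp add: field_simps)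
  qed
  have cov: "{0..ts} \<subseteq> \<Union>\<F>"
  proof
    fix t assume t: "t \<in> {0..ts}"
    have "seg t \<in> S" using before[of t] segS t by (cases "t = ts") auto
    then obtain \<tau> where "\<tau> \<in> top_simplices K" "seg t \<in> convex hull \<tau>" unfolding S_def by auto
    then show "t \<in> \<Union>\<F>" unfolding \<F>_def by auto
  qed
  have "\<bar>Lam (seg 0) - Lam (seg ts)\<bar> \<le> (nd / A) * (ts - 0)"
    by (rule cover_lip[OF fF clF lipF cov ts0])
  then have "Lam x' \<le> (nd / A) * ts" using seg0 Lneg by simp
  also have "\<dots> \<le> nd / A"
  proof -
    have "nd * ts \<le> nd" using ts1 ndpos by (simp add: mult_left_le)
    then have "(nd * ts) / A \<le> nd / A" using Apos by (simp add: divide_right_mono)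
    then show ?thesis by simp
  qed
  finally have "A * Lam x' \<le> nd" using Apos by (simp add: field_simps)
  then show ?thesis unfolding nd_def d_def by (simp add: dist_norm norm_minus_commute)
qed

end




context star_ctx begin

lemma link_dist:
  assumes \<sigma>T: "\<sigma> \<in> top_simplices K" and x\<sigma>: "x \<in> convex hull \<sigma>" and yS: "y \<in> S" and Ly: "Lam y = 0"
  shows "A * Lam x \<le> dist x y"
proof -
  note \<sigma>p = T_props[OF \<sigma>T]
  have sx\<sigma>: "sx \<sigma>" by (rule \<sigma>p(5))
  define R where "R = {\<rho>. \<exists>\<tau>\<in>top_simplices K. \<rho> \<subseteq> \<tau> \<and> card \<rho> < CARD('m)}"
  have finR: "finite R"
  proof -
    have "R \<subseteq> \<Union> (Pow ` top_simplices K)" unfolding R_def by auto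
    moreover have "finite (\<Union> (Pow ` top_simplices K))"
      using finT T_props(3) by (intro finite_Union) auto
    ultimately show ?thesis by (rule finite_subset)
  qed
  have R_props: "finite \<rho> \<and> card \<rho> < CARD('m)" if \<rho>R: "\<rho> \<in> R" for \<rho>
  proof -
    obtain \<tau> where "\<tau> \<in> top_simplices K" "\<rho> \<subseteq> \<tau>" "card \<rho> < CARD('m)" using \<rho>R unfolding R_def by blast
    then show ?thesis using T_props(3) finite_subset by blast
  qed
  define G where "G = (\<lambda>\<rho>. affine hull (insert y \<rho>)) ` R"
  have finG: "finite G" unfolding G_def using finR by simp
  have clG: "\<forall>C\<in>G. closed C \<and> interior C = {}"
  proof
    fix C assume "C \<in> G"
    then obtain \<rho> where \<rho>: "\<rho> \<in> R" "C = affine hull (insert y \<rho>)" unfolding G_def by blast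
    have f: "finite (insert y \<rho>)" using R_props[OF \<rho>(1)] by simp
    have "card (insert y \<rho>) \<le> Suc (card \<rho>)" using R_props[OF \<rho>(1)] by (simp add: card_insert_if)
    then have "card (insert y \<rho>) \<le> DIM(real^'m)" using R_props[OF \<rho>(1)] by simp
    then have "interior (affine hull (insert y \<rho>)) = {}" by (rule empty_interior_affine_hull[OF f])
    then show "closed C \<and> interior C = {}" using \<rho>(2) by simp
  qed
  define m1 where "m1 = real CARD('m) + 1"
  have m1pos: "0 < m1" unfolding m1_def by simp
  define b where "b = (\<Sum>v\<in>\<sigma>. (1 / m1) *\<^sub>R v)"
  have bcb: "bary_coord \<sigma> v b = 1 / m1" if "v \<in> \<sigma>" for v
  proof -
    have "sum (\<lambda>v. 1 / m1) \<sigma> = 1" using \<sigma>p(2) m1pos unfolding m1_def by simp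
    from bc_unique[OF sx\<sigma> this b_def[symmetric] that] show ?thesis .
  qed
  have eps: "A * Lam x \<le> dist x y + 2 * \<eta>" if \<eta>pos: "0 < \<eta>" for \<eta>
  proof -
    define s where "s = min 1 (\<eta> / (2 * (dist x b + 1)))"
    have dpos: "0 < dist x b + 1" using zero_le_dist[of x b] by linarith
    have spos: "0 < s" unfolding s_def using \<eta>pos dpos by simp
    have sle: "s \<le> 1" unfolding s_def by simp
    define xs where "xs = (1 - s) *\<^sub>R x + s *\<^sub>R b"
    have xs_coord: "s / m1 \<le> bary_coord \<sigma> v xs" if v: "v \<in> \<sigma>" for v
    proof -
      have "bary_coord \<sigma> v xs = (1 - s) * bary_coord \<sigma> v x + s * bary_coord \<sigma> v b"
        unfolding xs_def by (rule bc_comb2[OF sx\<sigma> v]) simp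
      moreover have "0 \<le> bary_coord \<sigma> v x" using bc_conv[OF sx\<sigma>] x\<sigma> v by blast
      moreover have "0 \<le> 1 - s" using sle by simp
      ultimately show ?thesis using bcb[OF v] by (simp add: mult_nonneg_nonneg)
    qed
    have smpos: "0 < s / m1" using spos m1pos by simp
    have "ball xs (A * (s / m1)) \<subseteq> convex hull \<sigma>"
      by (rule pos_interior[OF \<sigma>T smpos]) (use xs_coord in blast)
    moreover have "0 < A * (s / m1)" using Apos smpos by (rule mult_pos_pos)
    ultimately have xsint: "xs \<in> interior (convex hull \<sigma>)" unfolding mem_interior by blast
    have dxs: "dist x xs < \<eta>"
    proof -
      have "xs - x = s *\<^sub>R (b - x)" unfolding xs_def by (simp add: algebra_simps)
      then have "norm (xs - x) = s * norm (b - x)" using spos by simp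
      moreover have "dist x xs = norm (xs - x)" by (simp add: dist_norm norm_minus_commute)
      moreover have "dist x b = norm (b - x)" by (simp add: dist_norm norm_minus_commute)
      ultimately have "dist x xs = s * dist x b" by simp
      also have "\<dots> \<le> s * (dist x b + 1)" using spos by simp
      also have "\<dots> \<le> \<eta> / (2 * (dist x b + 1)) * (dist x b + 1)"
        by (rule mult_right_mono) (use dpos in \<open>simp_all add: s_def\<close>)
      also have "\<dots> = \<eta> / 2" using dpos by (simp add: field_simps)
      finally show ?thesis using \<eta>pos by simp
    qed
    define U where "U = ball x \<eta> \<inter> interior (convex hull \<sigma>)"
    have "open U" unfolding U_def by (intro open_Int open_ball open_interior)
    moreover have "U \<noteq> {}" unfolding U_def using xsint dxs by auto
    ultimately have "U - \<Union>G \<noteq> {}" using open_diff_closed_empty_interior[OF finG] clG by blast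
    then obtain x' where x'U: "x' \<in> U" and x'G: "x' \<notin> \<Union>G" by blast
    have x'\<sigma>: "x' \<in> convex hull \<sigma>" using x'U interior_subset unfolding U_def by blast
    have dxx': "dist x x' < \<eta>" using x'U unfolding U_def by simp
    have gen: "x' + t *\<^sub>R (y - x') \<notin> Q" if t: "0 \<le> t" "t < 1" for t
    proof
      define z where "z = x' + t *\<^sub>R (y - x')"
      assume "x' + t *\<^sub>R (y - x') \<in> Q"
      then have "z \<in> Q" unfolding z_def .
      then obtain C where C1: "C \<in> {convex hull \<rho> | \<rho>. \<exists>\<sigma>\<in>top_simplices K. \<rho> \<subseteq> \<sigma> \<and> card \<rho> < CARD('m)}"
        and C2: "z \<in> C" unfolding Q_def by (rule UnionE)
      from C1 have "\<exists>\<rho>. C = convex hull \<rho> \<and> (\<exists>\<sigma>\<in>top_simplices K. \<rho> \<subseteq> \<sigma> \<and> card \<rho> < CARD('m))"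
        unfolding mem_Collect_eq .
      then obtain \<rho> where \<rho>1: "C = convex hull \<rho>" and \<rho>2: "\<exists>\<sigma>\<in>top_simplices K. \<rho> \<subseteq> \<sigma> \<and> card \<rho> < CARD('m)"
        by (elim exE conjE)
      have \<rho>R: "\<rho> \<in> R" unfolding R_def using \<rho>2 by simp
      have z\<rho>: "z \<in> convex hull \<rho>" using C2 \<rho>1 by simp
      have "convex hull \<rho> \<subseteq> affine hull \<rho>" by (rule convex_hull_subset_affine_hull)
      also have "affine hull \<rho> \<subseteq> affine hull (insert y \<rho>)" by (rule hull_mono) auto
      finally have zin: "z \<in> affine hull (insert y \<rho>)" using z\<rho> by (rule subsetD)
      have yin: "y \<in> affine hull (insert y \<rho>)" by (rule hull_inc) simp
      have t1: "1 - t \<noteq> 0" using t by simp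
      define P where "P = (1 / (1 - t)) *\<^sub>R z + (- t / (1 - t)) *\<^sub>R y"
      have "P \<in> affine hull (insert y \<rho>)" unfolding P_def
        by (rule mem_affine[OF affine_affine_hull zin yin]) (use t1 in \<open>simp add: field_simps\<close>)
      moreover have "P = x'"
      proof -
        have "(1 - t) *\<^sub>R P = ((1 - t) * (1 / (1 - t))) *\<^sub>R z + ((1 - t) * (- t / (1 - t))) *\<^sub>R y"
          unfolding P_def by (simp only: scaleR_add_right scaleR_scaleR)
        also have "\<dots> = z - t *\<^sub>R y"
        proof -
          have c1: "(1 - t) * (1 / (1 - t)) = 1" using t1 by simp
          have c2: "(1 - t) * (- t / (1 - t)) = - t" using t1 by (simp add: field_simps)
          show ?thesis by (simp only: c1 c2) simp
        qed
        also have "\<dots> = (1 - t) *\<^sub>R x'" unfolding z_def by (simp add: algebra_simps)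
        finally show ?thesis using t1 by simp
      qed
      ultimately have "x' \<in> affine hull (insert y \<rho>)" by simp
      moreover have "affine hull (insert y \<rho>) \<in> G" unfolding G_def using \<rho>R by (rule imageI)
      ultimately have "x' \<in> \<Union>G" by (rule UnionI[rotated])
      then show False using x'G by simp
    qed
    have b1: "A * Lam x' \<le> dist x' y" by (rule seg_bound[OF \<sigma>T x'\<sigma> yS Ly gen])
    have "Lam x = bary_coord \<sigma> p x" "Lam x' = bary_coord \<sigma> p x'" using Lam_eq \<sigma>T x\<sigma> x'\<sigma> by auto
    then have b2: "A * \<bar>Lam x - Lam x'\<bar> \<le> dist x x'" using lipT[OF \<sigma>T ptop[OF \<sigma>T]] by simp
    have b3: "A * (Lam x - Lam x') \<le> A * \<bar>Lam x - Lam x'\<bar>" by (rule mult_left_mono) (use Apos in simp_all)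
    have b4: "dist x' y \<le> dist x' x + dist x y" by (rule dist_triangle)
    have "A * Lam x = A * Lam x' + A * (Lam x - Lam x')" by (simp add: algebra_simps)
    then show ?thesis using b1 b2 b3 b4 dxx' by (simp add: dist_commute)
  qed
  show ?thesis
  proof (rule ccontr)
    assume na: "\<not> A * Lam x \<le> dist x y"
    define \<eta> where "\<eta> = (A * Lam x - dist x y) / 4"
    have "0 < \<eta>" using na unfolding \<eta>_def by simp
    from eps[OF this] have h: "A * Lam x \<le> dist x y + 2 * \<eta>" .
    have e4: "4 * \<eta> = A * Lam x - dist x y" unfolding \<eta>_def by simp
    have aux: "\<And>X d e::real. X \<le> d + 2 * e \<Longrightarrow> 4 * e = X - d \<Longrightarrow> X \<le> d" by linarith
    have "A * Lam x \<le> dist x y" by (rule aux[OF h e4])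
    with na show False by simp
  qed
qed

end





lemma sq_diff_bound:
  fixes r s \<xi> L :: real
  assumes "\<bar>r - s\<bar> \<le> \<xi> * s" "0 \<le> s" "s \<le> L" "0 \<le> \<xi>" "0 \<le> r"
  shows "\<bar>r\<^sup>2 - s\<^sup>2\<bar> \<le> (2 * \<xi> + \<xi>\<^sup>2) * L\<^sup>2"
proof -
  have h2: "r + s \<le> (2 + \<xi>) * s" using assms(1) by (simp add: algebra_simps abs_le_iff)
  have "\<bar>r\<^sup>2 - s\<^sup>2\<bar> = \<bar>r - s\<bar> * (r + s)"
  proof -
    have "r\<^sup>2 - s\<^sup>2 = (r - s) * (r + s)" by (simp add: power2_eq_square algebra_simps)
    then have "\<bar>r\<^sup>2 - s\<^sup>2\<bar> = \<bar>r - s\<bar> * \<bar>r + s\<bar>" by (simp add: abs_mult)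
    then show ?thesis using assms(2,5) by simp
  qed
  also have "\<dots> \<le> (\<xi> * s) * ((2 + \<xi>) * s)"
    by (rule mult_mono[OF assms(1) h2]) (use assms in auto)
  also have "\<dots> = (2 * \<xi> + \<xi>\<^sup>2) * s\<^sup>2" by (simp add: power2_eq_square algebra_simps)
  also have "\<dots> \<le> (2 * \<xi> + \<xi>\<^sup>2) * L\<^sup>2"
    by (rule mult_left_mono) (use assms in \<open>auto intro: power_mono\<close>)
  finally show ?thesis .
qed

lemma distortion_close:
  fixes \<sigma> :: "(real^'m) set" and F :: "real^'m \<Rightarrow> real^'m"
  assumes sx\<sigma>: "sx \<sigma>" and fin: "finite \<sigma>" and card: "card \<sigma> = CARD('m) + 1"
    and dm: "distortion_map \<xi> F (convex hull \<sigma>)" and fixv: "\<forall>v\<in>\<sigma>. F v = v"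
    and x\<sigma>: "x \<in> convex hull \<sigma>" and \<xi>0: "0 \<le> \<xi>"
  shows "smallest_altitude \<sigma> * norm (F x - x) \<le> real CARD('m) * ((2 * \<xi> + \<xi>\<^sup>2) * (longest_edge \<sigma>)\<^sup>2)"
proof -
  define a where "a = smallest_altitude \<sigma>"
  define L where "L = longest_edge \<sigma>"
  define B where "B = (2 * \<xi> + \<xi>\<^sup>2) * L\<^sup>2"
  have B0: "0 \<le> B" unfolding B_def using \<xi>0 by simp
  define q where "q = F x"
  define w where "w = q - x"
  have "\<sigma> \<noteq> {}" using card by auto
  then obtain v0 where v0: "v0 \<in> \<sigma>" by blast
  define \<beta> where "\<beta> v = bary_coord \<sigma> v q - bary_coord \<sigma> v x" for v
  have sb: "sum \<beta> \<sigma> = 0" unfolding \<beta>_def using bc_sum[OF sx\<sigma>] by (simp add: sum_subtractf)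
  have sw: "(\<Sum>v\<in>\<sigma>. \<beta> v *\<^sub>R v) = w"
    unfolding \<beta>_def w_def using bc_rep[OF sx\<sigma>] by (simp add: scaleR_diff_left sum_subtractf)
  have sw2: "(\<Sum>v\<in>\<sigma>. \<beta> v *\<^sub>R (v - v0)) = w"
  proof -
    have "(\<Sum>v\<in>\<sigma>. \<beta> v *\<^sub>R (v - v0)) = (\<Sum>v\<in>\<sigma>. \<beta> v *\<^sub>R v) - (\<Sum>v\<in>\<sigma>. \<beta> v *\<^sub>R v0)"
      by (simp add: scaleR_diff_right sum_subtractf)
    also have "(\<Sum>v\<in>\<sigma>. \<beta> v *\<^sub>R v0) = sum \<beta> \<sigma> *\<^sub>R v0" by (simp add: scaleR_sum_left)
    finally show ?thesis using sb sw by simp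
  qed
  have ww: "w \<bullet> w = (\<Sum>v\<in>\<sigma>. \<beta> v * (w \<bullet> (v - v0)))"
  proof -
    have "w \<bullet> w = w \<bullet> (\<Sum>v\<in>\<sigma>. \<beta> v *\<^sub>R (v - v0))" using sw2 by simp
    also have "\<dots> = (\<Sum>v\<in>\<sigma>. \<beta> v * (w \<bullet> (v - v0)))" by (simp add: inner_sum_right)
    finally show ?thesis .
  qed
  have Dbound: "\<bar>(norm (q - u))\<^sup>2 - (norm (x - u))\<^sup>2\<bar> \<le> B" if u: "u \<in> \<sigma>" for u
  proof -
    have u\<sigma>: "u \<in> convex hull \<sigma>" using u by (rule hull_inc)
    have "\<bar>norm (F x - F u) - norm (x - u)\<bar> \<le> \<xi> * norm (x - u)"
      using dm x\<sigma> u\<sigma> unfolding distortion_map_def by blast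
    then have h: "\<bar>norm (q - u) - norm (x - u)\<bar> \<le> \<xi> * norm (x - u)" using fixv u unfolding q_def by simp
    have "norm (x - u) \<le> L" using dist_le_longest[OF fin u x\<sigma>] unfolding L_def by (simp add: dist_norm)
    then show ?thesis unfolding B_def by (intro sq_diff_bound[OF h]) (use \<xi>0 in auto)
  qed
  have Ibound: "\<bar>w \<bullet> (v - v0)\<bar> \<le> B" if v: "v \<in> \<sigma>" for v
  proof -
    have key: "2 * (w \<bullet> (v - v0)) = ((norm (q - v0))\<^sup>2 - (norm (x - v0))\<^sup>2) - ((norm (q - v))\<^sup>2 - (norm (x - v))\<^sup>2)"
      unfolding w_def by (simp add: power2_norm_eq_inner inner_diff_left inner_diff_right inner_commute algebra_simps)
    have "\<bar>2 * (w \<bullet> (v - v0))\<bar> \<le> B + B" using key Dbound[OF v] Dbound[OF v0] by linarith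
    then show ?thesis by simp
  qed
  have abeta: "a * \<bar>\<beta> v\<bar> \<le> norm w" if v: "v \<in> \<sigma>" for v
  proof -
    have "a \<le> infdist v (affine hull (\<sigma> - {v}))" unfolding a_def by (rule alt_le[OF fin v])
    then have "a * \<bar>\<beta> v\<bar> \<le> infdist v (affine hull (\<sigma> - {v})) * \<bar>\<beta> v\<bar>" by (rule mult_right_mono) simp
    also have "\<dots> \<le> dist q x" unfolding \<beta>_def by (rule bc_lip[OF sx\<sigma> v])
    finally show ?thesis unfolding w_def by (simp add: dist_norm)
  qed
  have tm: "a * (\<beta> v * (w \<bullet> (v - v0))) \<le> (if v = v0 then 0 else norm w * B)" if v: "v \<in> \<sigma>" for v
  proof (cases "v = v0")
    case True then show ?thesis by simp
  next
    case False
    have "a * (\<beta> v * (w \<bullet> (v - v0))) \<le> \<bar>a * (\<beta> v * (w \<bullet> (v - v0)))\<bar>" by simp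
    also have "\<dots> = \<bar>a\<bar> * \<bar>\<beta> v\<bar> * \<bar>w \<bullet> (v - v0)\<bar>" by (simp add: abs_mult)
    also have "\<dots> \<le> norm w * B"
    proof -
      have a0: "0 \<le> a"
      proof -
        have "0 \<le> infdist v0 (affine hull (\<sigma> - {v0}))" by (rule infdist_nonneg)
        moreover have "a \<le> infdist v0 (affine hull (\<sigma> - {v0}))" unfolding a_def by (rule alt_le[OF fin v0])
        ultimately show ?thesis unfolding a_def smallest_altitude_def
          using fin v0 by (intro Min.boundedI) (auto intro: infdist_nonneg)
      qed
      have "\<bar>a\<bar> * \<bar>\<beta> v\<bar> \<le> norm w" using abeta[OF v] a0 by simp
      then show ?thesis using Ibound[OF v] by (intro mult_mono) auto
    qed
    finally show ?thesis using False by simp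
  qed
  have "a * (w \<bullet> w) = (\<Sum>v\<in>\<sigma>. a * (\<beta> v * (w \<bullet> (v - v0))))" using ww by (simp add: sum_distrib_left)
  also have "\<dots> \<le> (\<Sum>v\<in>\<sigma>. (if v = v0 then 0 else norm w * B))" by (rule sum_mono) (rule tm)
  also have "\<dots> = (\<Sum>v\<in>\<sigma> - {v0}. norm w * B)"
  proof -
    have "(\<Sum>v\<in>\<sigma>. (if v = v0 then 0 else norm w * B)) = (\<Sum>v\<in>\<sigma> - {v0}. (if v = v0 then 0 else norm w * B))"
      by (rule sum.mono_neutral_right) (use fin in auto)
    also have "\<dots> = (\<Sum>v\<in>\<sigma> - {v0}. norm w * B)" by (rule sum.cong) auto
    finally show ?thesis .
  qed
  also have "\<dots> = real CARD('m) * (norm w * B)" using card fin v0 by simp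
  finally have main: "a * (norm w)\<^sup>2 \<le> real CARD('m) * (norm w * B)" by (simp add: power2_norm_eq_inner)
  show ?thesis
  proof (cases "norm w = 0")
    case True then show ?thesis unfolding a_def[symmetric] B_def[symmetric] L_def[symmetric] w_def q_def
      using B0 by simp
  next
    case False
    then have np: "0 < norm w" by simp
    have "(a * norm w) * norm w \<le> (real CARD('m) * B) * norm w" using main by (simp add: power2_eq_square algebra_simps)
    then have "a * norm w \<le> real CARD('m) * B" using np by simp
    then show ?thesis unfolding a_def B_def L_def w_def q_def by simp
  qed
qed





lemma alt_le_longest:
  fixes \<sigma> :: "(real^'m) set"
  assumes fin: "finite \<sigma>" and v: "v \<in> \<sigma>" and u: "u \<in> \<sigma>" and uv: "u \<noteq> v"
  shows "smallest_altitude \<sigma> \<le> longest_edge \<sigma>"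
proof -
  have "smallest_altitude \<sigma> \<le> infdist v (affine hull (\<sigma> - {v}))" by (rule alt_le[OF fin v])
  also have "\<dots> \<le> dist v u" by (rule infdist_le) (rule hull_inc, use u uv in simp)
  also have "\<dots> \<le> longest_edge \<sigma>" by (rule dist_le_longest[OF fin u hull_inc[OF v]])
  finally show ?thesis .
qed

lemma two_elems:
  assumes "finite A" "2 \<le> card A"
  obtains u v where "u \<in> A" "v \<in> A" "u \<noteq> v"
proof -
  have "\<exists>u v. u \<in> A \<and> v \<in> A \<and> u \<noteq> v"
  proof (rule ccontr)
    assume "\<not> (\<exists>u v. u \<in> A \<and> v \<in> A \<and> u \<noteq> v)"
    then have "\<forall>a\<in>A. \<forall>b\<in>A. a = b" by blast
    then have "card A \<le> Suc 0" using card_le_Suc0_iff_eq[OF assms(1)] by blast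
    then show False using assms(2) by simp
  qed
  then show ?thesis using that by blast
qed

theorem mainTheorem7:
  fixes p :: "real^'m" and K :: "(real^'m) set set" and F :: "real^'m \<Rightarrow> real^'m"
    and s0 L0 t0 \<xi> \<delta> :: real
  assumes full: "full_star p K"
    and s0_pos: "0 < s0" and t0_pos: "0 < t0"
    and lengths: "\<forall>\<sigma>\<in>top_simplices K. s0 \<le> longest_edge \<sigma> \<and> longest_edge \<sigma> \<le> L0"
    and thick: "\<forall>\<sigma>\<in>top_simplices K. thickness \<sigma> \<ge> t0"
    and fixes_vertices: "\<forall>\<sigma>\<in>K. \<forall>v\<in>\<sigma>. F v = v"
    and distortion: "\<forall>\<sigma>\<in>top_simplices K. distortion_map \<xi> F (convex hull \<sigma>)"
    and xi_bound: "\<xi> < 1/6 * (real CARD('m) / (real CARD('m) + 1)) * (s0 / L0) * t0\<^sup>2"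
    and delta_pos: "0 < \<delta>"
    and delta_bound: "\<delta> \<le> 1 / (real CARD('m) + 1) - 6 * L0 * \<xi> / (real CARD('m) * s0 * t0\<^sup>2)"
  shows "F ` V_delta p K \<delta> \<inter> F ` carrier (boundary_complex K) = {}"
proof (rule ccontr)
  assume "F ` V_delta p K \<delta> \<inter> F ` carrier (boundary_complex K) \<noteq> {}"
  then obtain x y where xV: "x \<in> V_delta p K \<delta>" and yB: "y \<in> carrier (boundary_complex K)" and Fxy: "F x = F y"
    by auto
  define m where "m = real CARD('m)"
  have m1: "1 \<le> m" unfolding m_def by simp
  have star: "is_star p K" and nobd: "{p} \<notin> boundary_complex K" using full unfolding full_star_def by auto
  have sc: "simplicial_complex K" using star unfolding is_star_def by simp
  have stp: "\<forall>\<tau>\<in>K. \<exists>\<sigma>\<in>K. p \<in> \<sigma> \<and> \<tau> \<subseteq> \<sigma>" using star unfolding is_star_def by simp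
  have scs: "\<forall>\<sigma>\<in>K. finite \<sigma> \<and> \<sigma> \<noteq> {} \<and> \<not> affine_dependent \<sigma>"
    using sc unfolding simplicial_complex_def by (elim conjE) assumption
  have Tprops: "\<sigma> \<in> K \<and> card \<sigma> = CARD('m) + 1 \<and> finite \<sigma> \<and> \<not> affine_dependent \<sigma>" if "\<sigma> \<in> top_simplices K" for \<sigma>
  proof -
    have "\<sigma> \<in> K" "card \<sigma> = CARD('m) + 1" using that unfolding top_simplices_def by auto
    then show ?thesis using scs by auto
  qed
  have ptop: "p \<in> \<sigma>" if \<sigma>T: "\<sigma> \<in> top_simplices K" for \<sigma>
  proof -
    have \<sigma>K: "\<sigma> \<in> K" using Tprops[OF \<sigma>T] by simp
    obtain \<sigma>' where \<sigma>': "\<sigma>' \<in> K" "p \<in> \<sigma>'" "\<sigma> \<subseteq> \<sigma>'" using stp \<sigma>K by blast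
    have f': "finite \<sigma>'" and i': "\<not> affine_dependent \<sigma>'" using scs \<sigma>'(1) by auto
    have "of_nat (card \<sigma>') = aff_dim \<sigma>' + 1" by (rule aff_dim_affine_independent[OF i'])
    moreover have "aff_dim \<sigma>' \<le> int DIM(real^'m)" by (rule aff_dim_le_DIM)
    ultimately have "card \<sigma>' \<le> CARD('m) + 1" by simp
    then have "card \<sigma>' \<le> card \<sigma>" using Tprops[OF \<sigma>T] by simp
    then have "\<sigma> = \<sigma>'" by (rule card_seteq[OF f' \<sigma>'(3)])
    then show ?thesis using \<sigma>'(2) by simp
  qed
  define A where "A = m * s0 * t0"
  have Apos: "0 < A" unfolding A_def using m1 s0_pos t0_pos by simp
  have alt_bound: "m * longest_edge \<sigma> * t0 \<le> smallest_altitude \<sigma>" if \<sigma>T: "\<sigma> \<in> top_simplices K" for \<sigma>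
  proof -
    have Lpos: "0 < longest_edge \<sigma>" using lengths \<sigma>T s0_pos by force
    have mL: "0 < m * longest_edge \<sigma>" using m1 Lpos by simp
    have "t0 \<le> thickness \<sigma>" using thick \<sigma>T by blast
    then have "t0 \<le> smallest_altitude \<sigma> / (m * longest_edge \<sigma>)" unfolding thickness_def m_def by simp
    then have "t0 * (m * longest_edge \<sigma>) \<le> smallest_altitude \<sigma>" using mL by (simp add: le_divide_eq)
    then show ?thesis by (simp add: algebra_simps)
  qed
  have alt: "A \<le> smallest_altitude \<sigma>" if \<sigma>T: "\<sigma> \<in> top_simplices K" for \<sigma>
  proof -
    have "s0 \<le> longest_edge \<sigma>" using lengths \<sigma>T by blast
    then have "m * s0 * t0 \<le> m * longest_edge \<sigma> * t0" using m1 t0_pos by (simp add: mult_right_mono)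
    then show ?thesis unfolding A_def using alt_bound[OF \<sigma>T] by linarith
  qed
  interpret sctx: star_ctx K p A
    by (unfold_locales) (use sc ptop alt Apos nobd in auto)
  obtain \<sigma> where \<sigma>T: "\<sigma> \<in> top_simplices K" and x\<sigma>: "x \<in> convex hull \<sigma>"
    and lam: "bary_coord \<sigma> p x > 1 / (real CARD('m) + 1) - \<delta>"
    using xV unfolding V_delta_def by blast
  obtain \<rho>' where \<rho>'B: "\<rho>' \<in> boundary_complex K" and y\<rho>': "y \<in> convex hull \<rho>'"
    using yB unfolding carrier_def by blast
  obtain \<rho> where \<rho>K: "\<rho> \<in> K" and c\<rho>: "card \<rho> = CARD('m)" and one: "card {\<sigma>\<in>top_simplices K. \<rho> \<subseteq> \<sigma>} = 1"
    and \<rho>'\<rho>: "\<rho>' \<subseteq> \<rho>"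
    using \<rho>'B unfolding boundary_complex_def by blast
  obtain \<tau> where \<tau>T: "\<tau> \<in> top_simplices K" and \<rho>\<tau>: "\<rho> \<subseteq> \<tau>"
  proof -
    from one obtain z where "{\<sigma>\<in>top_simplices K. \<rho> \<subseteq> \<sigma>} = {z}" by (rule card_1_singletonE)
    then have "z \<in> top_simplices K" "\<rho> \<subseteq> z" by auto
    then show ?thesis by (rule that)
  qed
  have p\<rho>: "p \<notin> \<rho>"
  proof
    assume "p \<in> \<rho>"
    then have "{p} \<noteq> {} \<and> (\<exists>\<rho>\<in>K. card \<rho> = CARD('m) \<and> card {\<sigma>\<in>top_simplices K. \<rho> \<subseteq> \<sigma>} = 1 \<and> {p} \<subseteq> \<rho>)"
      using \<rho>K c\<rho> one by blast
    then have "{p} \<in> boundary_complex K" unfolding boundary_complex_def mem_Collect_eq .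
    with nobd show False by (rule notE)
  qed
  have y\<rho>: "y \<in> convex hull \<rho>" using hull_mono[OF \<rho>'\<rho>] y\<rho>' by (rule subsetD)
  have y\<tau>: "y \<in> convex hull \<tau>" using hull_mono[OF \<rho>\<tau>] y\<rho> by (rule subsetD)
  have sx\<tau>: "sx \<tau>" using Tprops[OF \<tau>T] sx_top by blast
  have sx\<sigma>: "sx \<sigma>" using Tprops[OF \<sigma>T] sx_top by blast
  have "bary_coord \<tau> p y = 0" by (rule bc_hull_face[OF sx\<tau> \<rho>\<tau> y\<rho> ptop[OF \<tau>T] p\<rho>])
  then have Ly: "sctx.Lam y = 0" using sctx.Lam_eq[OF \<tau>T y\<tau>] by simp
  have yS: "y \<in> sctx.S" unfolding sctx.S_def using \<tau>T y\<tau> by blast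
  have Lx: "sctx.Lam x = bary_coord \<sigma> p x" by (rule sctx.Lam_eq[OF \<sigma>T x\<sigma>])
  have link: "A * bary_coord \<sigma> p x \<le> dist x y" using sctx.link_dist[OF \<sigma>T x\<sigma> yS Ly] Lx by simp
  have \<xi>0: "0 \<le> \<xi>"
  proof -
    have "card \<sigma> \<ge> 2" using Tprops[OF \<sigma>T] by simp
    then obtain u v where uv: "u \<in> \<sigma>" "v \<in> \<sigma>" "u \<noteq> v"
      using two_elems Tprops[OF \<sigma>T] by blast
    have "\<bar>norm (F u - F v) - norm (u - v)\<bar> \<le> \<xi> * norm (u - v)"
      using distortion \<sigma>T hull_inc[OF uv(1)] hull_inc[OF uv(2)] unfolding distortion_map_def by blast
    then have "0 \<le> \<xi> * norm (u - v)" by (meson abs_ge_zero order_trans)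
    moreover have "0 < norm (u - v)" using uv by simp
    ultimately show ?thesis by (simp add: zero_le_mult_iff)
  qed
  define \<epsilon> where "\<epsilon> = (2 * \<xi> + \<xi>\<^sup>2) * L0 / t0"
  have close: "norm (F z - z) \<le> \<epsilon>" if \<kappa>T: "\<kappa> \<in> top_simplices K" and z\<kappa>: "z \<in> convex hull \<kappa>" for \<kappa> z
  proof -
    have props: "\<kappa> \<in> K" "card \<kappa> = CARD('m) + 1" "finite \<kappa>" "\<not> affine_dependent \<kappa>" using Tprops[OF \<kappa>T] by auto
    have sx\<kappa>: "sx \<kappa>" using props sx_top by blast
    define L where "L = longest_edge \<kappa>"
    define c where "c = 2 * \<xi> + \<xi>\<^sup>2"
    have c0: "0 \<le> c" unfolding c_def using \<xi>0 by simp
    have Lpos: "0 < L" unfolding L_def using lengths \<kappa>T s0_pos by force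
    have LL0: "L \<le> L0" unfolding L_def using lengths \<kappa>T by blast
    have fv: "\<forall>v\<in>\<kappa>. F v = v" using fixes_vertices props(1) by blast
    have dk: "smallest_altitude \<kappa> * norm (F z - z) \<le> m * (c * L\<^sup>2)"
      unfolding m_def c_def L_def
      by (rule distortion_close[OF sx\<kappa> props(3) props(2) _ fv z\<kappa> \<xi>0]) (use distortion \<kappa>T in blast)
    have "m * L * t0 * norm (F z - z) \<le> smallest_altitude \<kappa> * norm (F z - z)"
      using alt_bound[OF \<kappa>T] unfolding L_def by (rule mult_right_mono) simp
    then have "(m * L) * (t0 * norm (F z - z)) \<le> (m * L) * (c * L)" using dk
      by (simp add: power2_eq_square algebra_simps)
    then have "t0 * norm (F z - z) \<le> c * L" using m1 Lpos by (simp add: mult_le_cancel_left_pos)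
    also have "\<dots> \<le> c * L0" using LL0 c0 by (rule mult_left_mono)
    finally have "t0 * norm (F z - z) \<le> c * L0" .
    then have "norm (F z - z) \<le> c * L0 / t0" using t0_pos by (simp add: field_simps)
    then show ?thesis unfolding \<epsilon>_def c_def .
  qed
  have dxy: "dist x y \<le> 2 * \<epsilon>"
  proof -
    have "x - y = (x - F x) + (F y - y)" using Fxy by simp
    then have "norm (x - y) \<le> norm (x - F x) + norm (F y - y)" by (metis norm_triangle_ineq)
    moreover have "norm (x - F x) \<le> \<epsilon>" using close[OF \<sigma>T x\<sigma>] by (simp add: norm_minus_commute)
    moreover have "norm (F y - y) \<le> \<epsilon>" using close[OF \<tau>T y\<tau>] .
    ultimately show ?thesis by (simp add: dist_norm)
  qed
  have L0pos: "0 < L0" using lengths \<sigma>T s0_pos by force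
  have s0L0: "s0 \<le> L0" using lengths \<sigma>T by force
  have t0le1: "t0 \<le> 1"
  proof -
    have "card \<sigma> \<ge> 2" using Tprops[OF \<sigma>T] by simp
    then obtain u v where uv: "u \<in> \<sigma>" "v \<in> \<sigma>" "u \<noteq> v"
      using two_elems Tprops[OF \<sigma>T] by blast
    have "smallest_altitude \<sigma> \<le> longest_edge \<sigma>"
      by (rule alt_le_longest[OF _ uv(2) uv(1) uv(3)]) (use Tprops[OF \<sigma>T] in simp)
    moreover have "m * longest_edge \<sigma> * t0 \<le> smallest_altitude \<sigma>" by (rule alt_bound[OF \<sigma>T])
    moreover have "0 < longest_edge \<sigma>" using lengths \<sigma>T s0_pos by force
    moreover have "m * longest_edge \<sigma> * t0 = (m * t0) * longest_edge \<sigma>" by (simp add: algebra_simps)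
    ultimately have "m * t0 * longest_edge \<sigma> \<le> 1 * longest_edge \<sigma>" by linarith
    then have "m * t0 \<le> 1" using \<open>0 < longest_edge \<sigma>\<close> by (simp add: mult_le_cancel_right_pos)
    moreover have "t0 \<le> m * t0" using m1 t0_pos by simp
    ultimately show ?thesis by simp
  qed
  have xi_lt1: "\<xi> < 1"
  proof -
    have f1: "m / (m + 1) \<le> 1" using m1 by simp
    have f2: "s0 / L0 \<le> 1" using s0L0 L0pos by simp
    have f3: "t0\<^sup>2 \<le> 1" using t0le1 t0_pos by (simp add: power_le_one)
    have "(m / (m + 1)) * (s0 / L0) * t0\<^sup>2 \<le> 1"
      by (intro mult_le_one f1 f2 f3) (use m1 s0_pos L0pos in auto)
    moreover have "1/6 * (m / (m + 1)) * (s0 / L0) * t0\<^sup>2 = 1/6 * ((m / (m + 1)) * (s0 / L0) * t0\<^sup>2)"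
      by (simp only: mult.assoc)
    moreover have "\<xi> < 1/6 * (m / (m + 1)) * (s0 / L0) * t0\<^sup>2" using xi_bound unfolding m_def .
    moreover have aux: "\<And>P X Y::real. P \<le> 1 \<Longrightarrow> Y = 1/6 * P \<Longrightarrow> \<xi> < Y \<Longrightarrow> \<xi> < 1" by linarith
    ultimately show ?thesis by blast
  qed
  have lam2: "6 * L0 * \<xi> / (m * s0 * t0\<^sup>2) < bary_coord \<sigma> p x" using lam delta_bound unfolding m_def by simp
  have "6 * L0 * \<xi> / t0 = A * (6 * L0 * \<xi> / (m * s0 * t0\<^sup>2))"
    unfolding A_def using m1 s0_pos t0_pos by (simp add: field_simps power2_eq_square)
  also have "\<dots> \<le> A * bary_coord \<sigma> p x"
    by (rule mult_left_mono) (use lam2 Apos in auto)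
  also have "\<dots> \<le> dist x y" by (rule link)
  also have "\<dots> \<le> 2 * \<epsilon>" by (rule dxy)
  also have "\<dots> = (2 * ((2 * \<xi> + \<xi>\<^sup>2) * L0)) / t0" unfolding \<epsilon>_def by simp
  finally have "6 * L0 * \<xi> / t0 \<le> (2 * ((2 * \<xi> + \<xi>\<^sup>2) * L0)) / t0" .
  then have "6 * L0 * \<xi> \<le> 2 * ((2 * \<xi> + \<xi>\<^sup>2) * L0)" using t0_pos by (simp add: divide_le_cancel)
  then have "L0 * (2 * \<xi>) \<le> L0 * (2 * \<xi>\<^sup>2)" by (simp add: algebra_simps)
  then have "2 * \<xi> \<le> 2 * \<xi>\<^sup>2" using L0pos by (simp add: mult_le_cancel_left_pos)
  then have "\<xi> \<le> \<xi> * \<xi>" by (simp add: power2_eq_square)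
  moreover have "\<xi> * \<xi> < \<xi> * 1 \<or> \<xi> = 0" using xi_lt1 \<xi>0 by (metis mult_strict_left_mono order_le_less)
  ultimately have "\<xi> = 0" by auto
  then have "0 < bary_coord \<sigma> p x" using lam2 by simp
  then have "0 < A * bary_coord \<sigma> p x" using Apos by simp
  moreover have "\<epsilon> = 0" unfolding \<epsilon>_def using \<open>\<xi> = 0\<close> by simp
  ultimately show False using link dxy by linarith
qed



end
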